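(* Let $(\Lambda,d)$ be a $k$-graph and let $(\overline{\Lambda},\overline d)$ be the extension described in the context. Then $\overline{\Lambda}$ with $\overline d$ satisfies the factorization property: for every morphism $f$ of $\overline{\Lambda}$ and $a,b\in\mathbb{N}^k$ with $\overline d(f)=a+b$ there exist unique morphisms $g,h$ of $\overline{\Lambda}$ with $f=gh$, $\overline d(g)=a$ and $\overline d(h)=b$.
   Context: A $k$-graph $(\Lambda,d)$ is a countable category with a degree functor $d:\Lambda\to\mathbb{N}^k$ satisfying unique factorization; $\Lambda^0$ vertices, $r,s$ range/source, $v\Lambda^n=\{\lambda:r(\lambda)=v,d(\lambda)=n\}$; $e_i$ standard basis, $\le$ coordinatewise, $\vee,\wedge$ coordinatewise max/min. For $m\in(\mathbb{N}\cup\{\infty\})^k$, $\Omega_{k,m}$ has objects $\{p\in\mathbb{N}^k:p\le m\}$, morphisms $(p,q)$, $p\le q\le m$, $r(p,q)=p$, $s(p,q)=q$, $d(p,q)=q-p$. A graph morphism $x:\Omega_{k,m}\to\Lambda$ is a degree-preserving functor; $d(x)=m$, $x(a,b)=x((a,b))$, $x(a)=x(a,a)$. It is a boundary path if there is $n_x\in\mathbb{N}^k$, $n_x\le d(x)$, with $x(p)\Lambda^{e_i}=\emptyset$ whenever $p\in\mathbb{N}^k$, $n_x\le p\le d(x)$, $p_i=d(x)_i$; $\Lambda^{\le\infty}$ is the set of boundary paths. $\sigma^px(a,b)=x(a+p,b+p)$ ($p\le d(x)$); $\lambda x$ denotes concatenation of $\lambda$ (with $s(\lambda)=x(0)$) in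 front of $x$, a graph morphism on $\Omega_{k,d(\lambda)+d(x)}$. $V_\Lambda=\{(x;m):x\in\Lambda^{\le\infty},m\in\mathbb{N}^k,m\not\le d(x)\}$, $(x;m)\approx(y;p)$ iff $x(m\wedge d(x))=y(p\wedge d(y))$ and $m-m\wedge d(x)=p-p\wedge d(y)$; classes $[x;m]$ form $\widetilde{V_\Lambda}$. $P_\Lambda=\{(x;(m,n)):x\in\Lambda^{\le\infty},m\le n\in\mathbb{N}^k,n\not\le d(x)\}$, $(x;(m,n))\sim(y;(p,q))$ iff $x(m\wedge d(x),n\wedge d(x))=y(p\wedge d(y),q\wedge d(y))$, $m-m\wedge d(x)=p-p\wedge d(y)$, $n-m=q-p$; classes $[x;(m,n)]$ form $\widetilde{P_\Lambda}$. The extension $\overline{\Lambda}$ is the category with objects $\Lambda^0\sqcup\widetilde{V_\Lambda}$ and morphisms $\Lambda\sqcup\widetilde{P_\Lambda}$: on $\Lambda$ everything is as in $\Lambda$; $\overline r([x;(m,n)])=x(m)$ if $m\le d(x)$, else $[x;m]$; $\overline s([x;(m,n)])=[x;n]$; identity at $[x;m]$ is $[x;(m,m)]$; $\lambda[x;(m,n)]=[\lambda\sigma^mx;(0,d(\lambda)+n-m)]$ when $s(\lambda)=\overline r([x;(m,n)])$; $[x;(m,n)][y;(p,q)]=[z;(m,n+q-p)]$ with $z=x(0,n\wedge d(x))\sigma^{p\wedge d(y)}y$ when $\overline s([x;(m,n)])=\overline r([y;(p,q)])$. The degree is $\overline d|_\Lambda=d$ and $\overline d([x;(m,n)])=n-m$.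 *)

theory Defs
  imports Main "HOL-Library.Extended_Nat" "HOL-Library.Function_Algebras"
    "HOL-Library.Countable_Set"
begin

text \<open>Elements of N^k are functions nat => nat vanishing at indices >= k;
  elements of (N u {infinity})^k are functions nat => enat vanishing at indices >= k.\<close>

type_synonym vec = "nat \<Rightarrow> nat"
type_synonym evec = "nat \<Rightarrow> enat"

definition NK :: "nat \<Rightarrow> vec set" where
  "NK k = {n. \<forall>i. k \<le> i \<longrightarrow> n i = 0}"

definition ENK :: "nat \<Rightarrow> evec set" where
  "ENK k = {n. \<forall>i. k \<le> i \<longrightarrow> n i = 0}"

definition basis :: "nat \<Rightarrow> vec" where
  "basis i = (\<lambda>j. if j = i then 1 else 0)"

definition vle :: "vec \<Rightarrow> evec \<Rightarrow> bool" where
  "vle m D \<longleftrightarrow> (\<forall>i. enat (m i) \<le> D i)"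

definition meet :: "vec \<Rightarrow> evec \<Rightarrow> vec" where
  "meet m D = (\<lambda>i. if enat (m i) \<le> D i then m i else the_enat (D i))"

definition eadd :: "vec \<Rightarrow> evec \<Rightarrow> evec" where
  "eadd m D = (\<lambda>i. enat (m i) + D i)"

definition esub :: "evec \<Rightarrow> vec \<Rightarrow> evec" where
  "esub D m = (\<lambda>i. D i - enat (m i))"

record ('v, 'a) kgraph =
  kg_obj :: "'v set"
  kg_mor :: "'a set"
  kg_rng :: "'a \<Rightarrow> 'v"
  kg_src :: "'a \<Rightarrow> 'v"
  kg_cmp :: "'a \<Rightarrow> 'a \<Rightarrow> 'a"
  kg_id  :: "'v \<Rightarrow> 'a"
  kg_deg :: "'a \<Rightarrow> vec"

definition is_kgraph :: "nat \<Rightarrow> ('v, 'a) kgraph \<Rightarrow> bool" where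
  "is_kgraph k G \<longleftrightarrow>
     countable (kg_obj G) \<and> countable (kg_mor G) \<and>
     (\<forall>v \<in> kg_obj G. kg_id G v \<in> kg_mor G \<and> kg_rng G (kg_id G v) = v \<and> kg_src G (kg_id G v) = v) \<and>
     (\<forall>l \<in> kg_mor G. kg_rng G l \<in> kg_obj G \<and> kg_src G l \<in> kg_obj G) \<and>
     (\<forall>l \<in> kg_mor G. \<forall>m \<in> kg_mor G. kg_src G l = kg_rng G m \<longrightarrow>
        kg_cmp G l m \<in> kg_mor G \<and> kg_rng G (kg_cmp G l m) = kg_rng G l \<and>
        kg_src G (kg_cmp G l m) = kg_src G m) \<and>
     (\<forall>l \<in> kg_mor G. kg_cmp G (kg_id G (kg_rng G l)) l = l \<and> kg_cmp G l (kg_id G (kg_src G l)) = l) \<and>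
     (\<forall>l \<in> kg_mor G. \<forall>m \<in> kg_mor G. \<forall>n \<in> kg_mor G.
        kg_src G l = kg_rng G m \<and> kg_src G m = kg_rng G n \<longrightarrow>
        kg_cmp G (kg_cmp G l m) n = kg_cmp G l (kg_cmp G m n)) \<and>
     (\<forall>l \<in> kg_mor G. kg_deg G l \<in> NK k) \<and>
     (\<forall>l \<in> kg_mor G. \<forall>m \<in> kg_mor G. kg_src G l = kg_rng G m \<longrightarrow>
        kg_deg G (kg_cmp G l m) = kg_deg G l + kg_deg G m) \<and>
     (\<forall>l \<in> kg_mor G. \<forall>m \<in> NK k. \<forall>n \<in> NK k. kg_deg G l = m + n \<longrightarrow>
        (\<exists>!p. fst p \<in> kg_mor G \<and> snd p \<in> kg_mor G \<and> kg_src G (fst p) = kg_rng G (snd p) \<and>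
              l = kg_cmp G (fst p) (snd p) \<and> kg_deg G (fst p) = m \<and> kg_deg G (snd p) = n))"

text \<open>A path is a pair (d(x), x) where x(p,q) is the image of the morphism (p,q) of
  Omega_{k,d(x)}; values outside the domain are fixed to undefined.\<close>

type_synonym 'a kpath = "evec \<times> (vec \<Rightarrow> vec \<Rightarrow> 'a)"

definition in_Omega :: "nat \<Rightarrow> evec \<Rightarrow> vec \<Rightarrow> vec \<Rightarrow> bool" where
  "in_Omega k D p q \<longleftrightarrow> p \<in> NK k \<and> q \<in> NK k \<and> p \<le> q \<and> vle q D"

definition graph_morphism :: "nat \<Rightarrow> ('v, 'a) kgraph \<Rightarrow> 'a kpath \<Rightarrow> bool" where
  "graph_morphism k G x \<longleftrightarrow>
     fst x \<in> ENK k \<and>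
     (\<forall>p q. in_Omega k (fst x) p q \<longrightarrow> snd x p q \<in> kg_mor G \<and> kg_deg G (snd x p q) = q - p) \<and>
     (\<forall>p q t. in_Omega k (fst x) p q \<and> in_Omega k (fst x) q t \<longrightarrow>
        kg_src G (snd x p q) = kg_rng G (snd x q t) \<and> kg_cmp G (snd x p q) (snd x q t) = snd x p t) \<and>
     (\<forall>p. in_Omega k (fst x) p p \<longrightarrow> snd x p p = kg_id G (kg_rng G (snd x p p))) \<and>
     (\<forall>p q. \<not> in_Omega k (fst x) p q \<longrightarrow> snd x p q = undefined)"

definition vtx :: "('v, 'a) kgraph \<Rightarrow> 'a kpath \<Rightarrow> vec \<Rightarrow> 'v" where
  "vtx G x p = kg_rng G (snd x p p)"

definition boundary_paths :: "nat \<Rightarrow> ('v, 'a) kgraph \<Rightarrow> 'a kpath set" where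
  "boundary_paths k G = {x. graph_morphism k G x \<and>
     (\<exists>nx \<in> NK k. vle nx (fst x) \<and>
        (\<forall>p \<in> NK k. \<forall>i < k. nx \<le> p \<and> vle p (fst x) \<and> enat (p i) = fst x i \<longrightarrow>
           {l \<in> kg_mor G. kg_rng G l = vtx G x p \<and> kg_deg G l = basis i} = {}))}"

definition restrictP :: "nat \<Rightarrow> evec \<Rightarrow> (vec \<Rightarrow> vec \<Rightarrow> 'a) \<Rightarrow> (vec \<Rightarrow> vec \<Rightarrow> 'a)" where
  "restrictP k D f = (\<lambda>a b. if in_Omega k D a b then f a b else undefined)"

definition shift :: "nat \<Rightarrow> vec \<Rightarrow> 'a kpath \<Rightarrow> 'a kpath" where
  "shift k p x = (esub (fst x) p, restrictP k (esub (fst x) p) (\<lambda>a b. snd x (a + p) (b + p)))"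

definition mid :: "('v, 'a) kgraph \<Rightarrow> 'a \<Rightarrow> vec \<Rightarrow> vec \<Rightarrow> 'a" where
  "mid G mu a b = (THE nu. \<exists>al be. al \<in> kg_mor G \<and> nu \<in> kg_mor G \<and> be \<in> kg_mor G \<and>
      kg_src G al = kg_rng G nu \<and> kg_src G nu = kg_rng G be \<and>
      mu = kg_cmp G al (kg_cmp G nu be) \<and> kg_deg G al = a \<and> kg_deg G nu = b - a)"

text \<open>concatenation lambda x (s(lambda) = x(0)), a graph morphism on Omega_{k,d(lambda)+d(x)}:
  (lambda x)(a,b) is the segment (a,b) of lambda x(0, (b v d(lambda)) - d(lambda)).\<close>
definition concat :: "nat \<Rightarrow> ('v, 'a) kgraph \<Rightarrow> 'a \<Rightarrow> 'a kpath \<Rightarrow> 'a kpath" where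
  "concat k G l x = (let D = eadd (kg_deg G l) (fst x) in
     (D, restrictP k D (\<lambda>a b. mid G (kg_cmp G l (snd x 0 (sup b (kg_deg G l) - kg_deg G l))) a b)))"

definition VL :: "nat \<Rightarrow> ('v, 'a) kgraph \<Rightarrow> ('a kpath \<times> vec) set" where
  "VL k G = {(x, m). x \<in> boundary_paths k G \<and> m \<in> NK k \<and> \<not> vle m (fst x)}"

definition Vrel :: "nat \<Rightarrow> ('v, 'a) kgraph \<Rightarrow> (('a kpath \<times> vec) \<times> ('a kpath \<times> vec)) set" where
  "Vrel k G = {((x, m), (y, p)). (x, m) \<in> VL k G \<and> (y, p) \<in> VL k G \<and>
      vtx G x (meet m (fst x)) = vtx G y (meet p (fst y)) \<and>
      m - meet m (fst x) = p - meet p (fst y)}"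

definition PL :: "nat \<Rightarrow> ('v, 'a) kgraph \<Rightarrow> ('a kpath \<times> (vec \<times> vec)) set" where
  "PL k G = {(x, (m, n)). x \<in> boundary_paths k G \<and> m \<in> NK k \<and> n \<in> NK k \<and> m \<le> n \<and>
      \<not> vle n (fst x)}"

definition Prel :: "nat \<Rightarrow> ('v, 'a) kgraph \<Rightarrow>
    (('a kpath \<times> (vec \<times> vec)) \<times> ('a kpath \<times> (vec \<times> vec))) set" where
  "Prel k G = {((x, (m, n)), (y, (p, q))). (x, (m, n)) \<in> PL k G \<and> (y, (p, q)) \<in> PL k G \<and>
      snd x (meet m (fst x)) (meet n (fst x)) = snd y (meet p (fst y)) (meet q (fst y)) \<and>
      m - meet m (fst x) = p - meet p (fst y) \<and> n - m = q - p}"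

definition rep :: "'b set \<Rightarrow> 'b" where
  "rep c = (SOME e. e \<in> c)"

definition bar_obj :: "nat \<Rightarrow> ('v, 'a) kgraph \<Rightarrow> ('v + ('a kpath \<times> vec) set) set" where
  "bar_obj k G = Inl ` kg_obj G \<union> Inr ` (VL k G // Vrel k G)"

definition bar_mor :: "nat \<Rightarrow> ('v, 'a) kgraph \<Rightarrow> ('a + ('a kpath \<times> (vec \<times> vec)) set) set" where
  "bar_mor k G = Inl ` kg_mor G \<union> Inr ` (PL k G // Prel k G)"

definition bar_deg :: "nat \<Rightarrow> ('v, 'a) kgraph \<Rightarrow> ('a + ('a kpath \<times> (vec \<times> vec)) set) \<Rightarrow> vec" where
  "bar_deg k G f = (case f of Inl l \<Rightarrow> kg_deg G l
     | Inr c \<Rightarrow> (case rep c of (x, (m, n)) \<Rightarrow> n - m))"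

definition bar_rng :: "nat \<Rightarrow> ('v, 'a) kgraph \<Rightarrow> ('a + ('a kpath \<times> (vec \<times> vec)) set) \<Rightarrow>
    ('v + ('a kpath \<times> vec) set)" where
  "bar_rng k G f = (case f of Inl l \<Rightarrow> Inl (kg_rng G l)
     | Inr c \<Rightarrow> (case rep c of (x, (m, n)) \<Rightarrow>
          if vle m (fst x) then Inl (vtx G x m) else Inr (Vrel k G `` {(x, m)})))"

definition bar_src :: "nat \<Rightarrow> ('v, 'a) kgraph \<Rightarrow> ('a + ('a kpath \<times> (vec \<times> vec)) set) \<Rightarrow>
    ('v + ('a kpath \<times> vec) set)" where
  "bar_src k G f = (case f of Inl l \<Rightarrow> Inl (kg_src G l)
     | Inr c \<Rightarrow> (case rep c of (x, (m, n)) \<Rightarrow> Inr (Vrel k G `` {(x, n)})))"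

definition bar_cmp :: "nat \<Rightarrow> ('v, 'a) kgraph \<Rightarrow> ('a + ('a kpath \<times> (vec \<times> vec)) set) \<Rightarrow>
    ('a + ('a kpath \<times> (vec \<times> vec)) set) \<Rightarrow> ('a + ('a kpath \<times> (vec \<times> vec)) set)" where
  "bar_cmp k G f g = (case f of
       Inl l \<Rightarrow> (case g of
           Inl m \<Rightarrow> Inl (kg_cmp G l m)
         | Inr c \<Rightarrow> (case rep c of (x, (m, n)) \<Rightarrow>
              Inr (Prel k G `` {(concat k G l (shift k m x), (0, kg_deg G l + n - m))})))
     | Inr c1 \<Rightarrow> (case g of
           Inl m \<Rightarrow> undefined
         | Inr c2 \<Rightarrow> (case rep c1 of (x, (m, n)) \<Rightarrow> (case rep c2 of (y, (p, q)) \<Rightarrow>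
              Inr (Prel k G `` {(concat k G (snd x 0 (meet n (fst x))) (shift k (meet p (fst y)) y),
                                (m, n + q - p))})))))"

end

theory Submission
  imports Defs
begin

locale kgl =
  fixes k :: nat and G :: "('v, 'a) kgraph"
  assumes kg: "is_kgraph k G"
begin

abbreviation "M \<equiv> kg_mor G"
abbreviation "Ob \<equiv> kg_obj G"
abbreviation "rng \<equiv> kg_rng G"
abbreviation "src \<equiv> kg_src G"
abbreviation "cmp \<equiv> kg_cmp G"
abbreviation "idm \<equiv> kg_id G"
abbreviation "deg \<equiv> kg_deg G"

lemmas kgc = kg[unfolded is_kgraph_def]
lemmas c3 = kgc[THEN conjunct2, THEN conjunct2, THEN conjunct1]
lemmas c4 = kgc[THEN conjunct2, THEN conjunct2, THEN conjunct2, THEN conjunct1]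
lemmas c5 = kgc[THEN conjunct2, THEN conjunct2, THEN conjunct2, THEN conjunct2, THEN conjunct1]
lemmas c6 = kgc[THEN conjunct2, THEN conjunct2, THEN conjunct2, THEN conjunct2, THEN conjunct2, THEN conjunct1]
lemmas c7 = kgc[THEN conjunct2, THEN conjunct2, THEN conjunct2, THEN conjunct2, THEN conjunct2, THEN conjunct2, THEN conjunct1]
lemmas c8 = kgc[THEN conjunct2, THEN conjunct2, THEN conjunct2, THEN conjunct2, THEN conjunct2, THEN conjunct2, THEN conjunct2, THEN conjunct1]
lemmas c9 = kgc[THEN conjunct2, THEN conjunct2, THEN conjunct2, THEN conjunct2, THEN conjunct2, THEN conjunct2, THEN conjunct2, THEN conjunct2, THEN conjunct1]
lemmas c10 = kgc[THEN conjunct2, THEN conjunct2, THEN conjunct2, THEN conjunct2, THEN conjunct2, THEN conjunct2, THEN conjunct2, THEN conjunct2, THEN conjunct2]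
lemma id_mor: "v \<in> Ob \<Longrightarrow> idm v \<in> M" using c3 by blast
lemma rng_id[simp]: "v \<in> Ob \<Longrightarrow> rng (idm v) = v" using c3 by blast
lemma src_id[simp]: "v \<in> Ob \<Longrightarrow> src (idm v) = v" using c3 by blast
lemma rng_obj: "l \<in> M \<Longrightarrow> rng l \<in> Ob" using c4 by blast
lemma src_obj: "l \<in> M \<Longrightarrow> src l \<in> Ob" using c4 by blast
lemma cmp_mor: "l \<in> M \<Longrightarrow> m \<in> M \<Longrightarrow> src l = rng m \<Longrightarrow> cmp l m \<in> M"
  using c5 by blast
lemma rng_cmp: "l \<in> M \<Longrightarrow> m \<in> M \<Longrightarrow> src l = rng m \<Longrightarrow> rng (cmp l m) = rng l"
  using c5 by blast
lemma src_cmp: "l \<in> M \<Longrightarrow> m \<in> M \<Longrightarrow> src l = rng m \<Longrightarrow> src (cmp l m) = src m"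
  using c5 by blast
lemma id_left: "l \<in> M \<Longrightarrow> cmp (idm (rng l)) l = l" using c6 by blast
lemma id_right: "l \<in> M \<Longrightarrow> cmp l (idm (src l)) = l" using c6 by blast
lemma assoc: "l \<in> M \<Longrightarrow> m \<in> M \<Longrightarrow> n \<in> M \<Longrightarrow> src l = rng m \<Longrightarrow> src m = rng n \<Longrightarrow>
   cmp (cmp l m) n = cmp l (cmp m n)"
  using c7 by blast
lemma deg_NK: "l \<in> M \<Longrightarrow> deg l \<in> NK k" using c8 by blast
lemma deg_cmp: "l \<in> M \<Longrightarrow> m \<in> M \<Longrightarrow> src l = rng m \<Longrightarrow> deg (cmp l m) = deg l + deg m"
  using c9 by blast
lemma fact: "l \<in> M \<Longrightarrow> a \<in> NK k \<Longrightarrow> b \<in> NK k \<Longrightarrow> deg l = a + b \<Longrightarrow>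
  (\<exists>!p. fst p \<in> M \<and> snd p \<in> M \<and> src (fst p) = rng (snd p) \<and>
              l = cmp (fst p) (snd p) \<and> deg (fst p) = a \<and> deg (snd p) = b)"
  using c10 by blast

lemmas basics = id_mor rng_obj src_obj cmp_mor rng_cmp src_cmp deg_cmp

lemma NK_le: "b \<in> NK k \<Longrightarrow> (a::vec) \<le> b \<Longrightarrow> a \<in> NK k"
proof -
  assume b: "b \<in> NK k" and ab: "a \<le> b"
  show "a \<in> NK k" unfolding NK_def
  proof (intro CollectI allI impI)
    fix i assume "k \<le> i"
    then have "b i = 0" using b unfolding NK_def by simp
    moreover have "a i \<le> b i" using ab by (simp add: le_fun_def)
    ultimately show "a i = 0" by simp
  qed
qed
lemma NK_add: "a \<in> NK k \<Longrightarrow> b \<in> NK k \<Longrightarrow> a + b \<in> NK k"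
  unfolding NK_def by simp
lemma NK_diff: "a \<in> NK k \<Longrightarrow> a - b \<in> NK k"
  unfolding NK_def by simp
lemma NK_0[simp]: "0 \<in> NK k" unfolding NK_def by simp

lemma deg_id: "v \<in> Ob \<Longrightarrow> deg (idm v) = 0"
proof -
  assume v: "v \<in> Ob"
  have "deg (cmp (idm v) (idm v)) = deg (idm v) + deg (idm v)"
    using v by (simp add: deg_cmp id_mor)
  moreover have "cmp (idm v) (idm v) = idm v" using id_left[OF id_mor[OF v]] v by simp
  ultimately show ?thesis by simp
qed

lemma UF:
  assumes "al \<in> M" "be \<in> M" "src al = rng be" "al' \<in> M" "be' \<in> M" "src al' = rng be'"
    "cmp al be = cmp al' be'" "deg al = deg al'"
  shows "al = al' \<and> be = be'"
proof -
  have d: "deg (cmp al be) = deg al + deg be" using deg_cmp[OF assms(1,2,3)] .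
  have d': "deg (cmp al' be') = deg al' + deg be'" using deg_cmp[OF assms(4,5,6)] .
  have db: "deg be = deg be'" using d d' assms(7,8) by (metis add_left_cancel)
  have cm: "cmp al be \<in> M" using cmp_mor[OF assms(1,2,3)] .
  from fact[OF cm deg_NK[OF assms(1)] deg_NK[OF assms(2)] d]
  have "\<exists>!p. fst p \<in> M \<and> snd p \<in> M \<and> src (fst p) = rng (snd p) \<and>
              cmp al be = cmp (fst p) (snd p) \<and> deg (fst p) = deg al \<and> deg (snd p) = deg be" .
  then have "(al, be) = (al', be')"
  proof (rule ex1E)
    fix p assume "fst p \<in> M \<and> snd p \<in> M \<and> src (fst p) = rng (snd p) \<and>
              cmp al be = cmp (fst p) (snd p) \<and> deg (fst p) = deg al \<and> deg (snd p) = deg be"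
      and u: "\<forall>y. fst y \<in> M \<and> snd y \<in> M \<and> src (fst y) = rng (snd y) \<and>
              cmp al be = cmp (fst y) (snd y) \<and> deg (fst y) = deg al \<and> deg (snd y) = deg be \<longrightarrow> y = p"
    have 1: "(al, be) = p" using u[rule_format, of "(al,be)"] assms by auto
    have 2: "(al', be') = p" using u[rule_format, of "(al',be')"] assms db by auto
    show ?thesis using 1 2 by simp
  qed
  then show ?thesis by simp
qed

lemma EF:
  assumes "l \<in> M" "a \<le> deg l"
  shows "\<exists>al be. al \<in> M \<and> be \<in> M \<and> src al = rng be \<and> l = cmp al be \<and> deg al = a \<and> deg be = deg l - a"
proof -
  have aN: "a \<in> NK k" using NK_le deg_NK assms by blast
  have bN: "deg l - a \<in> NK k" using NK_diff deg_NK assms by blast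
  have "deg l = a + (deg l - a)" using assms(2) by (simp add: le_fun_def fun_eq_iff)
  from fact[OF assms(1) aN bN this] show ?thesis by auto
qed

lemma deg0_id:
  assumes "l \<in> M" "deg l = 0" shows "l = idm (rng l)"
proof -
  have 1: "cmp (idm (rng l)) l = l" using id_left assms by simp
  have 2: "cmp l (idm (src l)) = l" using id_right assms by simp
  have o: "rng l \<in> Ob" "src l \<in> Ob" using assms rng_obj src_obj by auto
  show ?thesis
    using UF[of "idm (rng l)" l l "idm (src l)"] 1 2 o assms by (simp add: id_mor deg_id)
qed

lemma vdiff_mono: "(b::vec) \<le> c \<Longrightarrow> b - a \<le> c - a"
  by (simp add: le_fun_def diff_le_mono)
lemma vdiff_le_add: "(n::vec) - p \<le> q \<Longrightarrow> n \<le> q + p"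
  by (auto simp add: le_fun_def; (erule_tac x=x in allE)+; arith)
lemma vdiff_add: "(p::vec) \<le> q \<Longrightarrow> q - p + p = q"
  by (simp add: le_fun_def fun_eq_iff)
lemma vadd_diff: "(p::vec) \<le> q \<Longrightarrow> p + (q - p) = q"
  by (simp add: le_fun_def fun_eq_iff)
lemma vle_nqp: "(m::vec) \<le> n \<Longrightarrow> p \<le> q \<Longrightarrow> m \<le> n + q - p"
  by (auto simp add: le_fun_def; (erule_tac x=x in allE)+; arith)
lemma vlen_nqp: "(m::vec) \<le> n \<Longrightarrow> p \<le> q \<Longrightarrow> n + q - p - m = (n - m) + (q - p)"
  by (auto simp add: le_fun_def fun_eq_iff; (erule_tac x=x in allE)+; arith)
lemma V1: "(n::vec) - m = a + b \<Longrightarrow> m \<le> n \<Longrightarrow> m + a \<le> n"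
  by (auto simp add: le_fun_def fun_eq_iff; (erule_tac x=x in allE)+; arith)
lemma V2: "(n::vec) - m = a + b \<Longrightarrow> m \<le> n \<Longrightarrow> n - (m + a) = b"
  by (auto simp add: le_fun_def fun_eq_iff; (erule_tac x=x in allE)+; arith)
lemma V3: "((m::vec) + a) - m = a" by (simp add: fun_eq_iff)
lemma vle_le_iff: "(a::vec) \<le> b \<longleftrightarrow> (\<forall>i. a i \<le> b i)" by (simp add: le_fun_def)

lemma mid_eq:
  assumes "al \<in> M" "nu \<in> M" "be \<in> M" "src al = rng nu" "src nu = rng be"
    "mu = cmp al (cmp nu be)" "deg al = a" "deg nu = b - a"
  shows "mid G mu a b = nu"
  unfolding mid_def
proof (rule the_equality)
  show "\<exists>al be. al \<in> M \<and> nu \<in> M \<and> be \<in> M \<and> src al = rng nu \<and> src nu = rng be \<and>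
      mu = cmp al (cmp nu be) \<and> deg al = a \<and> deg nu = b - a" using assms by blast
next
  fix nu' assume "\<exists>al be. al \<in> M \<and> nu' \<in> M \<and> be \<in> M \<and> src al = rng nu' \<and> src nu' = rng be \<and>
      mu = cmp al (cmp nu' be) \<and> deg al = a \<and> deg nu' = b - a"
  then obtain al' be' where h: "al' \<in> M" "nu' \<in> M" "be' \<in> M" "src al' = rng nu'" "src nu' = rng be'"
      "mu = cmp al' (cmp nu' be')" "deg al' = a" "deg nu' = b - a" by blast
  have c1: "cmp nu be \<in> M" "rng (cmp nu be) = rng nu" using assms by (simp_all add: cmp_mor rng_cmp)
  have c2: "cmp nu' be' \<in> M" "rng (cmp nu' be') = rng nu'" using h by (simp_all add: cmp_mor rng_cmp)
  have "al' = al \<and> cmp nu' be' = cmp nu be"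
    apply (rule UF) using h c1 c2 assms by auto
  then have "nu' = nu \<and> be' = be"
    apply - apply (rule UF) using h assms by auto
  then show "nu' = nu" by simp
qed

lemma mid_ex:
  assumes "mu \<in> M" "a \<le> b" "b \<le> deg mu"
  shows "mid G mu a b \<in> M \<and> deg (mid G mu a b) = b - a \<and>
    (\<exists>al be. al \<in> M \<and> be \<in> M \<and> src al = rng (mid G mu a b) \<and> src (mid G mu a b) = rng be \<and>
       mu = cmp al (cmp (mid G mu a b) be) \<and> deg al = a \<and> deg be = deg mu - b)"
proof -
  have "a \<le> deg mu" using assms order_trans by blast
  from EF[OF assms(1) this] obtain al r where
    h1: "al \<in> M" "r \<in> M" "src al = rng r" "mu = cmp al r" "deg al = a" "deg r = deg mu - a" by blast
  have "b - a \<le> deg r" using h1 assms vdiff_mono by simp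
  from EF[OF h1(2) this] obtain nu be where
    h2: "nu \<in> M" "be \<in> M" "src nu = rng be" "r = cmp nu be" "deg nu = b - a" "deg be = deg r - (b - a)" by blast
  have db: "deg be = deg mu - b" using h1 h2 assms by (simp add: le_fun_def fun_eq_iff)
  have rr: "rng r = rng nu" using h2 by (simp add: rng_cmp)
  have e: "mid G mu a b = nu" apply (rule mid_eq[of al nu be]) using h1 h2 rr by auto
  show ?thesis using e h1 h2 rr db by auto
qed

lemma mid_mor: "mu \<in> M \<Longrightarrow> a \<le> b \<Longrightarrow> b \<le> deg mu \<Longrightarrow> mid G mu a b \<in> M"
  using mid_ex by blast
lemma mid_deg: "mu \<in> M \<Longrightarrow> a \<le> b \<Longrightarrow> b \<le> deg mu \<Longrightarrow> deg (mid G mu a b) = b - a"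
  using mid_ex by blast

lemma mid_cmp:
  assumes "mu \<in> M" "a \<le> b" "b \<le> c" "c \<le> deg mu"
  shows "src (mid G mu a b) = rng (mid G mu b c) \<and> cmp (mid G mu a b) (mid G mu b c) = mid G mu a c"
proof -
  have "b \<le> deg mu" using assms order_trans by blast
  from mid_ex[OF assms(1) assms(2) this] obtain al be1 where
    h1: "al \<in> M" "be1 \<in> M" "src al = rng (mid G mu a b)" "src (mid G mu a b) = rng be1"
       "mu = cmp al (cmp (mid G mu a b) be1)" "deg al = a" "deg be1 = deg mu - b"
    and n1: "mid G mu a b \<in> M" "deg (mid G mu a b) = b - a" by blast
  define n1 where "n1 = mid G mu a b"
  have "c - b \<le> deg be1" using h1 assms vdiff_mono by simp
  from EF[OF h1(2) this] obtain n2 be2 where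
    h2: "n2 \<in> M" "be2 \<in> M" "src n2 = rng be2" "be1 = cmp n2 be2" "deg n2 = c - b" by blast
  have r1: "rng be1 = rng n2" using h2 by (simp add: rng_cmp)
  have n12: "cmp n1 n2 \<in> M" "deg (cmp n1 n2) = c - a" "rng (cmp n1 n2) = rng n1" "src (cmp n1 n2) = src n2"
    using h1 h2 n1 r1 assms unfolding n1_def
    by (auto simp add: cmp_mor deg_cmp rng_cmp src_cmp le_fun_def fun_eq_iff)
  have mu1: "mu = cmp al (cmp (cmp n1 n2) be2)"
    using h1 h2 n1 r1 unfolding n1_def by (simp add: assoc)
  have e1: "mid G mu a c = cmp n1 n2"
    apply (rule mid_eq[OF h1(1) n12(1) h2(2)]) using h1 h2 n12 mu1 unfolding n1_def by auto
  have aln: "cmp al n1 \<in> M" "deg (cmp al n1) = b" "src (cmp al n1) = src n1"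
    using h1 n1 assms unfolding n1_def
    by (auto simp add: cmp_mor deg_cmp src_cmp le_fun_def fun_eq_iff)
  have mu2: "mu = cmp (cmp al n1) (cmp n2 be2)"
    using h1 h2 n1 r1 unfolding n1_def by (simp add: assoc cmp_mor rng_cmp)
  have e2: "mid G mu b c = n2"
    apply (rule mid_eq[OF aln(1) h2(1) h2(2)]) using h1 h2 aln mu2 r1 unfolding n1_def by auto
  show ?thesis using e1 e2 h1 r1 unfolding n1_def by simp
qed

lemma mid_prefix:
  assumes "m1 \<in> M" "m2 \<in> M" "src m1 = rng m2" "a \<le> b" "b \<le> deg m1"
  shows "mid G (cmp m1 m2) a b = mid G m1 a b"
proof -
  define nu where "nu = mid G m1 a b"
  from mid_ex[OF assms(1,4,5)] obtain al be where
    h: "al \<in> M" "be \<in> M" "src al = rng nu" "src nu = rng be"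
       "m1 = cmp al (cmp nu be)" "deg al = a"
    and n: "nu \<in> M" "deg nu = b - a" unfolding nu_def by blast
  have nb: "cmp nu be \<in> M" "rng (cmp nu be) = rng nu" "src (cmp nu be) = src be"
    using h n by (simp_all add: cmp_mor rng_cmp src_cmp)
  have "src (cmp al (cmp nu be)) = src be" using h nb by (simp add: src_cmp)
  then have sb: "src be = rng m2" using assms h by simp
  have nb2: "cmp be m2 \<in> M" "rng (cmp be m2) = rng be" using sb h assms by (simp_all add: cmp_mor rng_cmp)
  have "cmp m1 m2 = cmp (cmp al (cmp nu be)) m2" using h by simp
  also have "\<dots> = cmp al (cmp (cmp nu be) m2)" using assoc h nb sb assms by simp
  also have "\<dots> = cmp al (cmp nu (cmp be m2))" using assoc h nb sb assms n by simp
  finally have e: "cmp m1 m2 = cmp al (cmp nu (cmp be m2))" .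
  have "mid G (cmp m1 m2) a b = nu"
    by (rule mid_eq[OF h(1) n(1) nb2(1) h(3)]) (use h n nb2 e in auto)
  then show ?thesis unfolding nu_def .
qed

lemma mid_suffix:
  assumes "m1 \<in> M" "m2 \<in> M" "src m1 = rng m2" "deg m1 \<le> a" "a \<le> b" "b \<le> deg m1 + deg m2"
  shows "mid G (cmp m1 m2) a b = mid G m2 (a - deg m1) (b - deg m1)"
proof -
  define nu where "nu = mid G m2 (a - deg m1) (b - deg m1)"
  have 1: "a - deg m1 \<le> b - deg m1" "b - deg m1 \<le> deg m2" using assms(4-6)
    by (auto simp add: le_fun_def fun_eq_iff; (erule_tac x=x in allE)+; arith)+
  from mid_ex[OF assms(2) 1] obtain al be where
    h: "al \<in> M" "be \<in> M" "src al = rng nu" "src nu = rng be"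
       "m2 = cmp al (cmp nu be)" "deg al = a - deg m1"
    and n: "nu \<in> M" "deg nu = (b - deg m1) - (a - deg m1)" unfolding nu_def by blast
  have nb: "cmp nu be \<in> M" "rng (cmp nu be) = rng nu"
    using h n by (simp_all add: cmp_mor rng_cmp)
  have "rng (cmp al (cmp nu be)) = rng al" using h nb by (simp add: rng_cmp)
  then have ra: "rng al = rng m2" using h by simp
  have ma: "cmp m1 al \<in> M" "src (cmp m1 al) = src al" using ra assms h by (simp_all add: cmp_mor src_cmp)
  have "cmp m1 m2 = cmp m1 (cmp al (cmp nu be))" using h by simp
  also have "\<dots> = cmp (cmp m1 al) (cmp nu be)" using assoc h nb ra assms by simp
  finally have e: "cmp m1 m2 = cmp (cmp m1 al) (cmp nu be)" .
  have da: "deg (cmp m1 al) = a" using h ra assms by (simp add: deg_cmp le_fun_def fun_eq_iff)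
  have dn: "deg nu = b - a" using n assms by (simp add: le_fun_def fun_eq_iff)
  have "mid G (cmp m1 m2) a b = nu"
    by (rule mid_eq[OF ma(1) n(1) h(2)]) (use h ma da dn e in auto)
  then show ?thesis unfolding nu_def .
qed

lemma mid_full:
  assumes "mu \<in> M" shows "mid G mu 0 (deg mu) = mu"
proof -
  have o: "rng mu \<in> Ob" "src mu \<in> Ob" using assms rng_obj src_obj by auto
  show ?thesis
    apply (rule mid_eq[of "idm (rng mu)" mu "idm (src mu)"])
    using o assms id_left id_right by (auto simp: id_mor deg_id)
qed

lemma mid_id:
  assumes "mu \<in> M" "a \<le> deg mu" shows "mid G mu a a = idm (rng (mid G mu a a))"
proof -
  have "mid G mu a a \<in> M" "deg (mid G mu a a) = 0" using mid_mor mid_deg assms by auto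
  then show ?thesis using deg0_id by blast
qed

lemma mid_rng0:
  assumes "mu \<in> M" "b \<le> deg mu" shows "rng (mid G mu 0 b) = rng mu"
proof -
  from mid_ex[OF assms(1) _ assms(2)] obtain al be where
    h: "al \<in> M" "be \<in> M" "src al = rng (mid G mu 0 b)" "src (mid G mu 0 b) = rng be"
       "mu = cmp al (cmp (mid G mu 0 b) be)" "deg al = 0"
    and n: "mid G mu 0 b \<in> M" by (metis zero_le)
  have "al = idm (rng al)" using deg0_id h by simp
  then have "src al = rng al" using h rng_obj src_id by metis
  have r1: "rng (cmp (mid G mu 0 b) be) = rng (mid G mu 0 b)" using rng_cmp[OF n h(2) h(4)] .
  have "rng (cmp al (cmp (mid G mu 0 b) be)) = rng al"
    using rng_cmp[OF h(1) cmp_mor[OF n h(2) h(4)]] h(3) r1 by simp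
  then have "rng mu = rng al" using h(5) by simp
  then show ?thesis using h \<open>src al = rng al\<close> by simp
qed

lemma E1: "enat b \<le> D - enat p \<Longrightarrow> enat p \<le> D \<Longrightarrow> enat (b + p) \<le> D"
  by (cases D) auto
lemma E2: "enat b = D - enat p \<Longrightarrow> enat p \<le> D \<Longrightarrow> enat (b + p) = D"
  by (cases D) auto
lemma E3: "enat a \<le> D \<Longrightarrow> enat (a - p) \<le> D - enat p"
  by (cases D) auto
lemma E4: "enat b \<le> enat l + D \<Longrightarrow> enat (max b l - l) \<le> D"
  by (cases D) auto
lemma E4': "enat b \<le> enat l + D \<Longrightarrow> enat (b - l) \<le> D"
  by (cases D) auto
lemma E5: "enat b = enat l + D \<Longrightarrow> enat (b - l) = D"
  by (cases D) auto
lemma E7: "a \<le> l \<Longrightarrow> enat a \<le> enat l + D"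
  by (cases D) auto
lemma E6: "enat b \<le> D \<Longrightarrow> enat (l + b) \<le> enat l + D"
  by (cases D) auto

lemma vle_mono: "p \<le> q \<Longrightarrow> vle q D \<Longrightarrow> vle p D"
  unfolding vle_def le_fun_def by (meson enat_ord_simps(1) order_trans)
lemma vle_0[simp]: "vle 0 D" unfolding vle_def by (simp add: zero_enat_def[symmetric])

lemma in_Omega_refl1: "in_Omega k D p q \<Longrightarrow> in_Omega k D p p"
  unfolding in_Omega_def using vle_mono by blast
lemma in_Omega_refl2: "in_Omega k D p q \<Longrightarrow> in_Omega k D q q"
  unfolding in_Omega_def by blast
lemma in_Omega_trans: "in_Omega k D p q \<Longrightarrow> in_Omega k D q t \<Longrightarrow> in_Omega k D p t"
  unfolding in_Omega_def by auto
lemma in_Omega_sub: "in_Omega k D p t \<Longrightarrow> p \<le> q \<Longrightarrow> q \<le> t \<Longrightarrow> q \<in> NK k \<Longrightarrow> in_Omega k D p q \<and> in_Omega k D q t"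
  unfolding in_Omega_def using vle_mono by blast

section \<open>graph morphisms\<close>

context
  fixes x :: "'a kpath"
  assumes gm: "graph_morphism k G x"
begin

lemma gm_ENK: "fst x \<in> ENK k" using gm unfolding graph_morphism_def by blast
lemma gm_mor: "in_Omega k (fst x) p q \<Longrightarrow> snd x p q \<in> M"
  using gm unfolding graph_morphism_def by blast
lemma gm_deg: "in_Omega k (fst x) p q \<Longrightarrow> deg (snd x p q) = q - p"
  using gm unfolding graph_morphism_def by blast
lemma gm_cmp: "in_Omega k (fst x) p q \<Longrightarrow> in_Omega k (fst x) q t \<Longrightarrow>
   src (snd x p q) = rng (snd x q t) \<and> cmp (snd x p q) (snd x q t) = snd x p t"
  using gm unfolding graph_morphism_def by blast
lemma gm_id: "in_Omega k (fst x) p p \<Longrightarrow> snd x p p = idm (rng (snd x p p))"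
  using gm unfolding graph_morphism_def by blast

lemma gm_rng: "in_Omega k (fst x) p q \<Longrightarrow> rng (snd x p q) = vtx G x p"
proof -
  assume a: "in_Omega k (fst x) p q"
  have pp: "in_Omega k (fst x) p p" using in_Omega_refl1[OF a] .
  from gm_cmp[OF pp a] have "src (snd x p p) = rng (snd x p q)" "cmp (snd x p p) (snd x p q) = snd x p q" by auto
  then show ?thesis unfolding vtx_def using rng_cmp gm_mor pp a by metis
qed

lemma gm_src: "in_Omega k (fst x) p q \<Longrightarrow> src (snd x p q) = vtx G x q"
proof -
  assume a: "in_Omega k (fst x) p q"
  have qq: "in_Omega k (fst x) q q" using in_Omega_refl2[OF a] .
  from gm_cmp[OF a qq] have e: "src (snd x p q) = rng (snd x q q)" by auto
  then show ?thesis unfolding vtx_def .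
qed

lemma gm_mid:
  assumes "in_Omega k (fst x) 0 t" "p \<le> q" "q \<le> t" "p \<in> NK k" "q \<in> NK k"
  shows "snd x p q = mid G (snd x 0 t) p q"
proof -
  have z: "0 \<le> q" "0 \<le> p" by (simp_all add: le_fun_def)
  have o1: "in_Omega k (fst x) 0 q" "in_Omega k (fst x) q t" using in_Omega_sub[OF assms(1) z(1) assms(3,5)] by auto
  have o2: "in_Omega k (fst x) 0 p" "in_Omega k (fst x) p q" using in_Omega_sub[OF o1(1) z(2) assms(2,4)] by auto
  have c1: "src (snd x p q) = rng (snd x q t)" "cmp (snd x p q) (snd x q t) = snd x p t"
    using gm_cmp[OF o2(2) o1(2)] by auto
  have o3: "in_Omega k (fst x) p t" using in_Omega_trans o2(2) o1(2) by blast
  have c2: "src (snd x 0 p) = rng (snd x p t)" "cmp (snd x 0 p) (snd x p t) = snd x 0 t"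
    using gm_cmp[OF o2(1) o3] by auto
  have r: "rng (snd x p t) = rng (snd x p q)" using gm_rng o2(2) o3 by simp
  show ?thesis
    apply (rule sym, rule mid_eq[of "snd x 0 p" _ "snd x q t"])
    using gm_mor[OF o2(1)] gm_mor[OF o2(2)] gm_mor[OF o1(2)] c1 c2 r gm_deg[OF o2(1)] gm_deg[OF o2(2)]
    by auto
qed

end

section \<open>shift\<close>

lemma shift_fst[simp]: "fst (shift k p x) = esub (fst x) p" unfolding shift_def by simp

lemma shift_Omega:
  assumes "in_Omega k (esub D p) a b" "p \<in> NK k" "vle p D"
  shows "in_Omega k D (a + p) (b + p)"
  using assms unfolding in_Omega_def vle_def esub_def
  by (auto simp: NK_add add_right_mono intro: E1)

lemma shift_val:
  "in_Omega k (esub (fst x) p) a b \<Longrightarrow> snd (shift k p x) a b = snd x (a + p) (b + p)"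
  unfolding shift_def restrictP_def by simp

lemma shift_gm:
  assumes gm: "graph_morphism k G x" and p: "p \<in> NK k" "vle p (fst x)"
  shows "graph_morphism k G (shift k p x)"
proof -
  have E: "esub (fst x) p \<in> ENK k" using gm_ENK[OF gm] p unfolding ENK_def NK_def esub_def
    by (simp add: zero_enat_def)
  note SO = shift_Omega[OF _ p]
  show ?thesis unfolding graph_morphism_def shift_fst
  proof (intro conjI allI impI)
    show "esub (fst x) p \<in> ENK k" by (rule E)
  next
    fix a b assume o: "in_Omega k (esub (fst x) p) a b"
    show "snd (shift k p x) a b \<in> M" using shift_val[OF o] gm_mor[OF gm SO[OF o]] by simp
    show "deg (snd (shift k p x) a b) = b - a" using shift_val[OF o] gm_deg[OF gm SO[OF o]]
      by (simp add: fun_eq_iff)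
  next
    fix a b t assume o: "in_Omega k (esub (fst x) p) a b \<and> in_Omega k (esub (fst x) p) b t"
    then have o1: "in_Omega k (esub (fst x) p) a b" and o2: "in_Omega k (esub (fst x) p) b t" by auto
    have o3: "in_Omega k (esub (fst x) p) a t" using in_Omega_trans o1 o2 by blast
    show "src (snd (shift k p x) a b) = rng (snd (shift k p x) b t)"
      using shift_val[OF o1] shift_val[OF o2] gm_cmp[OF gm SO[OF o1] SO[OF o2]] by simp
    show "cmp (snd (shift k p x) a b) (snd (shift k p x) b t) = snd (shift k p x) a t"
      using shift_val[OF o1] shift_val[OF o2] shift_val[OF o3] gm_cmp[OF gm SO[OF o1] SO[OF o2]] by simp
  next
    fix a assume o: "in_Omega k (esub (fst x) p) a a"
    show "snd (shift k p x) a a = idm (rng (snd (shift k p x) a a))"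
      using shift_val[OF o] gm_id[OF gm SO[OF o]] by simp
  next
    fix a b assume "\<not> in_Omega k (esub (fst x) p) a b"
    then show "snd (shift k p x) a b = undefined" unfolding shift_def restrictP_def by simp
  qed
qed

lemma shift_vtx:
  "in_Omega k (esub (fst x) p) a a \<Longrightarrow> vtx G (shift k p x) a = vtx G x (a + p)"
  unfolding vtx_def using shift_val by metis

lemma shift_bp:
  assumes bp: "x \<in> boundary_paths k G" and p: "p \<in> NK k" "vle p (fst x)"
  shows "shift k p x \<in> boundary_paths k G"
proof -
  have gm: "graph_morphism k G x" using bp unfolding boundary_paths_def by blast
  obtain nx where nx: "nx \<in> NK k" "vle nx (fst x)"
    "\<forall>q \<in> NK k. \<forall>i < k. nx \<le> q \<and> vle q (fst x) \<and> enat (q i) = fst x i \<longrightarrow>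
           {l \<in> M. rng l = vtx G x q \<and> deg l = basis i} = {}"
    using bp unfolding boundary_paths_def by blast
  have n1: "nx - p \<in> NK k" using NK_diff nx by blast
  have n2: "vle (nx - p) (esub (fst x) p)" using nx(2) unfolding vle_def esub_def
    by (simp add: E3)
  have n3: "\<forall>q \<in> NK k. \<forall>i < k. nx - p \<le> q \<and> vle q (esub (fst x) p) \<and> enat (q i) = esub (fst x) p i \<longrightarrow>
           {l \<in> M. rng l = vtx G (shift k p x) q \<and> deg l = basis i} = {}"
  proof (intro ballI allI impI)
    fix q i assume q: "q \<in> NK k" and i: "i < k"
      and h: "nx - p \<le> q \<and> vle q (esub (fst x) p) \<and> enat (q i) = esub (fst x) p i"
    have qq: "in_Omega k (esub (fst x) p) q q" using q h unfolding in_Omega_def by simp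
    have v: "vtx G (shift k p x) q = vtx G x (q + p)" using shift_vtx[OF qq] .
    have o: "in_Omega k (fst x) (q + p) (q + p)" using shift_Omega[OF qq p] .
    have a1: "q + p \<in> NK k" "vle (q + p) (fst x)" using o unfolding in_Omega_def by auto
    have a2: "nx \<le> q + p" using h vdiff_le_add by blast
    have a3: "enat ((q + p) i) = fst x i" using h p(2) unfolding vle_def esub_def
      by (simp add: E2)
    show "{l \<in> M. rng l = vtx G (shift k p x) q \<and> deg l = basis i} = {}"
      using nx(3) a1 a2 a3 i v by simp
  qed
  have "\<exists>nx\<in>NK k. vle nx (fst (shift k p x)) \<and>
        (\<forall>q \<in> NK k. \<forall>i < k. nx \<le> q \<and> vle q (fst (shift k p x)) \<and> enat (q i) = fst (shift k p x) i \<longrightarrow>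
           {l \<in> M. rng l = vtx G (shift k p x) q \<and> deg l = basis i} = {})"
    apply (rule bexI[of _ "nx - p"]) using n1 n2 n3 by simp_all
  then show ?thesis unfolding boundary_paths_def
    using shift_gm[OF gm p] by blast
qed

section \<open>concat\<close>

lemma concat_fst[simp]: "fst (concat k G l x) = eadd (deg l) (fst x)"
  unfolding concat_def Let_def by simp

lemma concat_snd:
  "in_Omega k (eadd (deg l) (fst x)) a b \<Longrightarrow>
   snd (concat k G l x) a b = mid G (cmp l (snd x 0 (sup b (deg l) - deg l))) a b"
  unfolding concat_def Let_def restrictP_def by simp

lemma NK_sup: "a \<in> NK k \<Longrightarrow> b \<in> NK k \<Longrightarrow> sup a b \<in> NK k" unfolding NK_def by simp

context
  fixes l and x :: "'a kpath"
  assumes gm: "graph_morphism k G x" and lM: "l \<in> M" and sl: "src l = vtx G x 0"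
begin

abbreviation "D' \<equiv> eadd (deg l) (fst x)"
definition "W b = cmp l (snd x 0 (sup b (deg l) - deg l))"

lemma W_Omega: "in_Omega k D' b b \<Longrightarrow> in_Omega k (fst x) 0 (sup b (deg l) - deg l)"
  unfolding in_Omega_def
proof (elim conjE, intro conjI)
  assume b: "b \<in> NK k" "vle b D'"
  show "sup b (deg l) - deg l \<in> NK k" using NK_diff NK_sup b deg_NK lM by blast
  show "(0::vec) \<le> sup b (deg l) - deg l" by (simp add: le_fun_def)
  show "vle (sup b (deg l) - deg l) (fst x)"
    using b(2) unfolding vle_def eadd_def by (simp add: sup_nat_def E4)
qed simp

lemma W_mor: "in_Omega k D' b b \<Longrightarrow> W b \<in> M \<and> deg (W b) = sup b (deg l) \<and> rng (W b) = rng l"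
proof -
  assume o: "in_Omega k D' b b"
  note o1 = W_Omega[OF o]
  have r: "src l = rng (snd x 0 (sup b (deg l) - deg l))" using gm_rng[OF gm o1] sl by simp
  show ?thesis unfolding W_def using cmp_mor[OF lM gm_mor[OF gm o1] r] deg_cmp[OF lM gm_mor[OF gm o1] r]
      gm_deg[OF gm o1] rng_cmp[OF lM gm_mor[OF gm o1] r]
    by (simp add: fun_eq_iff sup_nat_def)
qed

lemma W_prefix:
  assumes "in_Omega k D' b b" "in_Omega k D' t t" "b \<le> t"
  shows "W t = cmp (W b) (snd x (sup b (deg l) - deg l) (sup t (deg l) - deg l)) \<and>
         snd x (sup b (deg l) - deg l) (sup t (deg l) - deg l) \<in> M \<and>
         src (W b) = rng (snd x (sup b (deg l) - deg l) (sup t (deg l) - deg l))"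
proof -
  define b' where "b' = sup b (deg l) - deg l"
  define t' where "t' = sup t (deg l) - deg l"
  have le: "b' \<le> t'" unfolding b'_def t'_def using assms(3)
    by (intro vdiff_mono sup_mono) auto
  have o0: "in_Omega k (fst x) 0 t'" using W_Omega[OF assms(2)] unfolding t'_def .
  have b'N: "b' \<in> NK k" using W_Omega[OF assms(1)] unfolding b'_def in_Omega_def by blast
  have ob: "in_Omega k (fst x) 0 b'" "in_Omega k (fst x) b' t'"
    using in_Omega_sub[OF o0 _ le b'N] by (auto simp: le_fun_def)
  have c: "src (snd x 0 b') = rng (snd x b' t')" "cmp (snd x 0 b') (snd x b' t') = snd x 0 t'"
    using gm_cmp[OF gm ob] by auto
  have r: "src l = rng (snd x 0 b')" using gm_rng[OF gm ob(1)] sl by simp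
  have "W t = cmp l (cmp (snd x 0 b') (snd x b' t'))" unfolding W_def using c t'_def by simp
  also have "\<dots> = cmp (W b) (snd x b' t')" unfolding W_def b'_def[symmetric]
    using assoc[OF lM gm_mor[OF gm ob(1)] gm_mor[OF gm ob(2)] r c(1)] by simp
  finally show ?thesis unfolding b'_def[symmetric] t'_def[symmetric]
    using gm_mor[OF gm ob(2)] src_cmp[OF lM gm_mor[OF gm ob(1)] r] c(1) unfolding W_def b'_def by simp
qed

lemma z_eq:
  assumes "in_Omega k D' a b" "in_Omega k D' t t" "b \<le> t"
  shows "snd (concat k G l x) a b = mid G (W t) a b"
proof -
  have bb: "in_Omega k D' b b" using in_Omega_refl2[OF assms(1)] .
  have ab: "a \<le> b" using assms(1) unfolding in_Omega_def by blast
  from W_prefix[OF bb assms(2,3)] W_mor[OF bb]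
  have "mid G (W t) a b = mid G (W b) a b"
    using mid_prefix[of "W b"] ab by (simp add: le_fun_def)
  then show ?thesis using concat_snd[OF assms(1)] unfolding W_def by simp
qed

lemma concat_gm: "graph_morphism k G (concat k G l x)"
  unfolding graph_morphism_def concat_fst
proof (intro conjI allI impI)
  show "D' \<in> ENK k" using gm_ENK[OF gm] deg_NK[OF lM] unfolding ENK_def NK_def eadd_def
    by (simp add: zero_enat_def)
next
  fix a b assume o: "in_Omega k D' a b"
  have bb: "in_Omega k D' b b" using in_Omega_refl2[OF o] .
  have ab: "a \<le> b" using o unfolding in_Omega_def by blast
  note W = W_mor[OF bb]
  have bd: "b \<le> deg (W b)" using W by (simp add: le_fun_def)
  show "snd (concat k G l x) a b \<in> M" using z_eq[OF o bb order_refl] mid_mor W ab bd by simp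
  show "deg (snd (concat k G l x) a b) = b - a" using z_eq[OF o bb order_refl] mid_deg W ab bd by simp
next
  fix a b t assume o: "in_Omega k D' a b \<and> in_Omega k D' b t"
  then have o1: "in_Omega k D' a b" and o2: "in_Omega k D' b t" by auto
  have o3: "in_Omega k D' a t" using in_Omega_trans o1 o2 by blast
  have tt: "in_Omega k D' t t" using in_Omega_refl2[OF o2] .
  have ab: "a \<le> b" "b \<le> t" using o1 o2 unfolding in_Omega_def by auto
  note W = W_mor[OF tt]
  have bd: "t \<le> deg (W t)" using W by (simp add: le_fun_def)
  have e1: "snd (concat k G l x) a b = mid G (W t) a b" using z_eq[OF o1 tt ab(2)] .
  have e2: "snd (concat k G l x) b t = mid G (W t) b t" using z_eq[OF o2 tt order_refl] .
  have e3: "snd (concat k G l x) a t = mid G (W t) a t" using z_eq[OF o3 tt order_refl] .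
  from mid_cmp[of "W t" a b t] W ab bd
  show "src (snd (concat k G l x) a b) = rng (snd (concat k G l x) b t)"
    "cmp (snd (concat k G l x) a b) (snd (concat k G l x) b t) = snd (concat k G l x) a t"
    using e1 e2 e3 by auto
next
  fix a assume o: "in_Omega k D' a a"
  note W = W_mor[OF o]
  have bd: "a \<le> deg (W a)" using W by (simp add: le_fun_def)
  show "snd (concat k G l x) a a = idm (rng (snd (concat k G l x) a a))"
    using z_eq[OF o o order_refl] mid_id W bd by simp
next
  fix a b assume "\<not> in_Omega k D' a b"
  then show "snd (concat k G l x) a b = undefined" unfolding concat_def restrictP_def Let_def by simp
qed

lemma CV0:
  assumes "q \<in> NK k" "vle q (fst x)"
  shows "snd (concat k G l x) 0 (deg l + q) = cmp l (snd x 0 q)"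
proof -
  have o: "in_Omega k D' 0 (deg l + q)" unfolding in_Omega_def
    using assms deg_NK[OF lM] NK_add unfolding vle_def eadd_def by (auto simp: le_fun_def E6)
  have oo: "in_Omega k D' (deg l + q) (deg l + q)" using in_Omega_refl2[OF o] .
  have s: "sup (deg l + q) (deg l) - deg l = q" by (simp add: fun_eq_iff sup_nat_def)
  have oq: "in_Omega k (fst x) 0 q" using assms unfolding in_Omega_def by (simp add: le_fun_def)
  have r: "src l = rng (snd x 0 q)" using gm_rng[OF gm oq] sl by simp
  have "snd (concat k G l x) 0 (deg l + q) = mid G (cmp l (snd x 0 q)) 0 (deg l + q)"
    using z_eq[OF o oo order_refl] unfolding W_def s .
  also have "\<dots> = cmp l (snd x 0 q)"
    using mid_full[OF cmp_mor[OF lM gm_mor[OF gm oq] r]] deg_cmp[OF lM gm_mor[OF gm oq] r]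
      gm_deg[OF gm oq] by simp
  finally show ?thesis .
qed

lemma CV2:
  assumes "in_Omega k (fst x) p q"
  shows "snd (concat k G l x) (deg l + p) (deg l + q) = snd x p q"
proof -
  have pq: "p \<in> NK k" "q \<in> NK k" "p \<le> q" "vle q (fst x)" using assms unfolding in_Omega_def by auto
  have o: "in_Omega k D' (deg l + p) (deg l + q)" unfolding in_Omega_def
    using pq deg_NK[OF lM] NK_add unfolding vle_def eadd_def by (auto simp: le_fun_def E6)
  have oo: "in_Omega k D' (deg l + q) (deg l + q)" using in_Omega_refl2[OF o] .
  have s: "sup (deg l + q) (deg l) - deg l = q" by (simp add: fun_eq_iff sup_nat_def)
  have oq: "in_Omega k (fst x) 0 q" using pq unfolding in_Omega_def by (simp add: le_fun_def)
  have r: "src l = rng (snd x 0 q)" using gm_rng[OF gm oq] sl by simp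
  have "snd (concat k G l x) (deg l + p) (deg l + q) = mid G (cmp l (snd x 0 q)) (deg l + p) (deg l + q)"
    using z_eq[OF o oo order_refl] unfolding W_def s .
  also have "\<dots> = mid G (snd x 0 q) p q"
    using mid_suffix[OF lM gm_mor[OF gm oq] r, of "deg l + p" "deg l + q"] gm_deg[OF gm oq] pq
    by (simp add: le_fun_def fun_eq_iff)
  also have "\<dots> = snd x p q" using gm_mid[OF gm oq pq(3) order_refl pq(1,2)] by simp
  finally show ?thesis .
qed

lemma CV3:
  assumes "a \<le> deg l" "a \<in> NK k"
  shows "snd (concat k G l x) a (deg l) = mid G l a (deg l)"
proof -
  have o: "in_Omega k D' a (deg l)" unfolding in_Omega_def
    using assms deg_NK[OF lM] unfolding vle_def eadd_def
    by (auto simp: le_fun_def intro: E7)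
  have oo: "in_Omega k D' (deg l) (deg l)" using in_Omega_refl2[OF o] .
  have s: "sup (deg l) (deg l) - deg l = 0" by (simp add: fun_eq_iff)
  have o0: "in_Omega k (fst x) 0 0" unfolding in_Omega_def by simp
  have r: "src l = rng (snd x 0 0)" using gm_rng[OF gm o0] sl by simp
  have "snd (concat k G l x) a (deg l) = mid G (cmp l (snd x 0 0)) a (deg l)"
    using z_eq[OF o oo order_refl] unfolding W_def s .
  also have "\<dots> = mid G l a (deg l)"
    using mid_prefix[OF lM gm_mor[OF gm o0] r assms(1)] by simp
  finally show ?thesis .
qed

lemma concat_vtx:
  assumes "in_Omega k (fst x) p p"
  shows "vtx G (concat k G l x) (deg l + p) = vtx G x p"
  unfolding vtx_def using CV2[OF assms] by simp

end

lemma concat_bp: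
  assumes bp: "x \<in> boundary_paths k G" and lM: "l \<in> M" and sl: "src l = vtx G x 0"
  shows "concat k G l x \<in> boundary_paths k G"
proof -
  have gm: "graph_morphism k G x" using bp unfolding boundary_paths_def by blast
  obtain nx where nx: "nx \<in> NK k" "vle nx (fst x)"
    "\<forall>q \<in> NK k. \<forall>i < k. nx \<le> q \<and> vle q (fst x) \<and> enat (q i) = fst x i \<longrightarrow>
           {l \<in> M. rng l = vtx G x q \<and> deg l = basis i} = {}"
    using bp unfolding boundary_paths_def by blast
  have n1: "deg l + nx \<in> NK k" using NK_add nx deg_NK lM by blast
  have n2: "vle (deg l + nx) (eadd (deg l) (fst x))" using nx(2) unfolding vle_def eadd_def
    by (simp add: E6)
  have n3: "\<forall>q \<in> NK k. \<forall>i < k. deg l + nx \<le> q \<and> vle q (eadd (deg l) (fst x)) \<and>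
        enat (q i) = eadd (deg l) (fst x) i \<longrightarrow>
           {m \<in> M. rng m = vtx G (concat k G l x) q \<and> deg m = basis i} = {}"
  proof (intro ballI allI impI)
    fix q i assume q: "q \<in> NK k" and i: "i < k"
      and h: "deg l + nx \<le> q \<and> vle q (eadd (deg l) (fst x)) \<and> enat (q i) = eadd (deg l) (fst x) i"
    define q' where "q' = q - deg l"
    have qe: "q = deg l + q'" unfolding q'_def using h
      by (auto simp: le_fun_def fun_eq_iff; (erule_tac x=xa in allE)+; arith)
    have nq: "nx \<le> q'" unfolding q'_def using h
      by (auto simp: le_fun_def; (erule_tac x=xa in allE)+; arith)
    have q'N: "q' \<in> NK k" unfolding q'_def using NK_diff q by blast
    have vq: "vle q' (fst x)" using h unfolding q'_def vle_def eadd_def by (simp add: E4')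
    have qq: "in_Omega k (fst x) q' q'" unfolding in_Omega_def using q'N vq by simp
    have v: "vtx G (concat k G l x) q = vtx G x q'" using concat_vtx[OF gm lM sl qq] qe by simp
    have a3: "enat (q' i) = fst x i" using h unfolding q'_def eadd_def by (simp add: E5)
    show "{m \<in> M. rng m = vtx G (concat k G l x) q \<and> deg m = basis i} = {}"
      using nx(3) q'N vq nq a3 i v by simp
  qed
  have "\<exists>nx\<in>NK k. vle nx (fst (concat k G l x)) \<and>
        (\<forall>q \<in> NK k. \<forall>i < k. nx \<le> q \<and> vle q (fst (concat k G l x)) \<and> enat (q i) = fst (concat k G l x) i \<longrightarrow>
           {m \<in> M. rng m = vtx G (concat k G l x) q \<and> deg m = basis i} = {})"
    apply (rule bexI[of _ "deg l + nx"]) using n1 n2 n3 by simp_all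
  then show ?thesis unfolding boundary_paths_def
    using concat_gm[OF gm lM sl] by blast
qed

definition mv :: "nat \<Rightarrow> enat \<Rightarrow> nat" where
  "mv a D = (if enat a \<le> D then a else the_enat D)"

lemma meet_app: "meet m D i = mv (m i) (D i)" unfolding meet_def mv_def by simp

lemma mv_le: "mv a D \<le> a" unfolding mv_def by (cases D) auto
lemma mv_vle: "enat (mv a D) \<le> D" unfolding mv_def by (cases D) auto
lemma mv_mono: "a \<le> b \<Longrightarrow> mv a D \<le> mv b D" unfolding mv_def by (cases D) auto
lemma mv_id: "enat a \<le> D \<Longrightarrow> mv a D = a" unfolding mv_def by simp
lemma mv_off: "a - mv a D = 0 \<longleftrightarrow> enat a \<le> D" unfolding mv_def by (cases D) auto
lemma mv_off': "a \<le> mv a D \<longleftrightarrow> enat a \<le> D" unfolding mv_def by (cases D) auto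
lemma mv_I1: "m \<le> n \<Longrightarrow> (mv n D - mv m D) + (n - mv n D) = (m - mv m D) + (n - m)"
  unfolding mv_def by (cases D) auto
lemma mv_I2: "m \<le> n \<Longrightarrow> 0 < m - mv m D \<Longrightarrow> mv n D - mv m D = 0"
  unfolding mv_def by (cases D) auto
lemma mv_0[simp]: "mv 0 D = 0" unfolding mv_def by (simp add: zero_enat_def[symmetric])

lemma mv_enat: "mv a (enat d) = min a d" unfolding mv_def by simp
lemma mv_inf: "mv a \<infinity> = a" unfolding mv_def by simp
lemma pt_U:
  assumes "d1 + o2 = o1 + a" "o1 = m - mv m Dx" "mv n Dx - mv m Dx = d1 + d2" "n - m = a + b"
    "0 < o2 \<Longrightarrow> d2 = 0" "mv m Dx \<le> mv n Dx"
  shows "mv (m + a) Dx = mv m Dx + d1 \<and> (m + a) - mv (m + a) Dx = o2"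
  using assms by (cases Dx; cases "o2 = 0"; simp add: mv_enat mv_inf min_def split: if_splits; arith)
lemma pt_L1:
  assumes "p \<le> q" "enat p \<le> Dy"
  shows "mv (l + q - p) (enat l + (Dy - enat p)) = l + (mv q Dy - p)"
  using assms by (cases Dy) (simp_all add: mv_enat mv_inf)
lemma pt_L2:
  assumes "p \<le> q" "enat p \<le> Dy"
  shows "\<not> enat q \<le> Dy \<Longrightarrow> \<not> enat (l + q - p) \<le> enat l + (Dy - enat p)"
  using assms by (cases Dy) (simp_all)
lemma pt_R1:
  assumes "m \<le> n" "p \<le> q" "n - mv n Dx = p - mv p Dy"
  shows "mv m (enat (mv n Dx) + (Dy - enat (mv p Dy))) = mv m Dx"
  using assms by (cases Dx; cases Dy) (simp_all add: mv_enat mv_inf)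
lemma pt_R2:
  assumes "m \<le> n" "p \<le> q" "n - mv n Dx = p - mv p Dy"
  shows "mv (n + q - p) (enat (mv n Dx) + (Dy - enat (mv p Dy))) = mv n Dx + (mv q Dy - mv p Dy)"
  using assms by (cases Dx; cases Dy; simp add: mv_enat mv_inf min_def split: if_splits; arith)
lemma pt_R3:
  assumes "m \<le> n" "p \<le> q" "n - mv n Dx = p - mv p Dy"
  shows "\<not> enat p \<le> Dy \<Longrightarrow> \<not> enat (n + q - p) \<le> enat (mv n Dx) + (Dy - enat (mv p Dy))"
  using assms by (cases Dx; cases Dy) (simp_all add: mv_enat mv_inf)

section \<open>keys\<close>

definition key :: "'a kpath \<times> (vec \<times> vec) \<Rightarrow> 'a \<times> vec \<times> vec" where
  "key e = (case e of (x, (m, n)) \<Rightarrow> (snd x (meet m (fst x)) (meet n (fst x)), m - meet m (fst x), n - m))"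

definition vkey :: "'a kpath \<times> vec \<Rightarrow> 'v \<times> vec" where
  "vkey v = (case v of (x, m) \<Rightarrow> (vtx G x (meet m (fst x)), m - meet m (fst x)))"

definition CL :: "'a \<times> vec \<times> vec \<Rightarrow> ('a kpath \<times> (vec \<times> vec)) set" where
  "CL K = {e \<in> PL k G. key e = K}"

lemma Prel_img: "e \<in> PL k G \<Longrightarrow> Prel k G `` {e} = CL (key e)"
  unfolding CL_def Prel_def key_def by (cases e) auto

lemma Vrel_img: "v \<in> VL k G \<Longrightarrow> Vrel k G `` {v} = {w \<in> VL k G. vkey w = vkey v}"
  unfolding Vrel_def vkey_def by (cases v) auto

lemma Vrel_img_eq: "v \<in> VL k G \<Longrightarrow> Vrel k G `` {v} = Vrel k G `` {w} \<Longrightarrow> w \<in> VL k G \<and> vkey w = vkey v"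
  unfolding Vrel_def vkey_def by (cases v; cases w) auto

lemma Vrel_img_eq2: "v \<in> VL k G \<Longrightarrow> w \<in> VL k G \<Longrightarrow> vkey w = vkey v \<Longrightarrow> Vrel k G `` {v} = Vrel k G `` {w}"
  using Vrel_img by simp

lemma quot_iff: "c \<in> PL k G // Prel k G \<longleftrightarrow> (\<exists>e \<in> PL k G. c = CL (key e))"
  unfolding quotient_def using Prel_img by auto

lemma rep_CL: "e \<in> PL k G \<Longrightarrow> rep (CL (key e)) \<in> PL k G \<and> key (rep (CL (key e))) = key e"
proof -
  assume e: "e \<in> PL k G"
  then have "e \<in> CL (key e)" unfolding CL_def by simp
  then have "rep (CL (key e)) \<in> CL (key e)" unfolding rep_def by (rule someI)
  then show ?thesis unfolding CL_def by simp
qed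

lemma bar_mor_iff: "f \<in> bar_mor k G \<longleftrightarrow> (\<exists>l \<in> M. f = Inl l) \<or> (\<exists>e \<in> PL k G. f = Inr (CL (key e)))"
  unfolding bar_mor_def image_iff Un_iff using quot_iff by blast

lemma meet_NK: "m \<in> NK k \<Longrightarrow> meet m D \<in> NK k"
  unfolding NK_def meet_app by simp
lemma meet_le: "meet m D \<le> m" unfolding le_fun_def meet_app by (simp add: mv_le)
lemma meet_vle: "vle (meet m D) D" unfolding vle_def meet_app by (simp add: mv_vle)
lemma meet_mono: "m \<le> n \<Longrightarrow> meet m D \<le> meet n D" unfolding le_fun_def meet_app by (simp add: mv_mono)
lemma meet_id: "vle m D \<Longrightarrow> meet m D = m" unfolding vle_def fun_eq_iff meet_app by (simp add: mv_id)
lemma vle_off: "vle m D \<longleftrightarrow> m - meet m D = 0" unfolding vle_def fun_eq_iff meet_app by (simp add: mv_off')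

lemma PL_D:
  assumes "(x, (m, n)) \<in> PL k G"
  shows "x \<in> boundary_paths k G" "graph_morphism k G x" "m \<in> NK k" "n \<in> NK k" "m \<le> n" "\<not> vle n (fst x)"
    "in_Omega k (fst x) (meet m (fst x)) (meet n (fst x))"
  using assms unfolding PL_def boundary_paths_def in_Omega_def
  by (auto simp: meet_NK meet_mono meet_vle)

lemma seg_props:
  assumes "(x, (m, n)) \<in> PL k G"
  shows "snd x (meet m (fst x)) (meet n (fst x)) \<in> M"
    "deg (snd x (meet m (fst x)) (meet n (fst x))) = meet n (fst x) - meet m (fst x)"
    "rng (snd x (meet m (fst x)) (meet n (fst x))) = vtx G x (meet m (fst x))"
    "src (snd x (meet m (fst x)) (meet n (fst x))) = vtx G x (meet n (fst x))"
  using gm_mor[OF PL_D(2)[OF assms] PL_D(7)[OF assms]] gm_deg[OF PL_D(2)[OF assms] PL_D(7)[OF assms]]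
    gm_rng[OF PL_D(2)[OF assms] PL_D(7)[OF assms]] gm_src[OF PL_D(2)[OF assms] PL_D(7)[OF assms]]
  by auto

lemma key_I1:
  assumes "(x, (m, n)) \<in> PL k G"
  shows "n - meet n (fst x) = (m - meet m (fst x)) + (n - m) - (meet n (fst x) - meet m (fst x))"
proof -
  have "m \<le> n" using PL_D[OF assms] by simp
  show ?thesis unfolding fun_eq_iff
  proof
    fix i
    have "m i \<le> n i" using \<open>m \<le> n\<close> by (simp add: le_fun_def)
    from mv_I1[OF this, of "fst x i"] show "(n - meet n (fst x)) i =
      ((m - meet m (fst x)) + (n - m) - (meet n (fst x) - meet m (fst x))) i"
      by (simp add: meet_app)
  qed
qed

lemma key_I2:
  assumes "(x, (m, n)) \<in> PL k G" "0 < (m - meet m (fst x)) i"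
  shows "(meet n (fst x) - meet m (fst x)) i = 0"
proof -
  have "m \<le> n" using PL_D[OF assms(1)] by simp
  then have "m i \<le> n i" by (simp add: le_fun_def)
  from mv_I2[OF this, of "fst x i"] show ?thesis using assms(2) unfolding meet_app by simp
qed

lemma CompL:
  assumes lM: "l \<in> M" and e: "(y, (p, q)) \<in> PL k G" and vp: "vle p (fst y)" and sl: "src l = vtx G y p"
  shows "(concat k G l (shift k p y), (0, deg l + q - p)) \<in> PL k G \<and>
    key (concat k G l (shift k p y), (0, deg l + q - p)) =
      (cmp l (snd y (meet p (fst y)) (meet q (fst y))), 0, deg l + (q - p))"
proof -
  note P = PL_D[OF e]
  define y' where "y' = shift k p y"
  define qq where "qq = meet q (fst y)"
  have mp: "meet p (fst y) = p" using meet_id[OF vp] .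
  have pqq: "p \<le> qq" unfolding qq_def using meet_mono[OF P(5), of "fst y"] mp by simp
  have gy': "graph_morphism k G y'" unfolding y'_def using shift_gm[OF P(2) P(3) vp] .
  have by': "y' \<in> boundary_paths k G" unfolding y'_def using shift_bp[OF P(1) P(3) vp] .
  have o00: "in_Omega k (esub (fst y) p) 0 0" unfolding in_Omega_def by simp
  have sl': "src l = vtx G y' 0" unfolding y'_def using shift_vtx[OF o00] sl by simp
  have bz: "concat k G l y' \<in> boundary_paths k G" using concat_bp[OF by' lM sl'] .
  have N: "deg l + q - p \<in> NK k" using NK_diff NK_add deg_NK[OF lM] P(4) by blast
  obtain i where i: "\<not> enat (q i) \<le> fst y i" using P(6) unfolding vle_def by blast
  have piq: "p i \<le> q i" using P(5) by (simp add: le_fun_def)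
  have epi: "enat (p i) \<le> fst y i" using vp unfolding vle_def by simp
  have nv: "\<not> vle (deg l + q - p) (fst (concat k G l y'))"
    unfolding vle_def y'_def concat_fst eadd_def esub_def shift_fst
    using pt_L2[OF piq epi i, of "deg l i"] by auto
  have inPL: "(concat k G l y', (0, deg l + q - p)) \<in> PL k G"
    unfolding PL_def using bz N nv by (simp add: le_fun_def)
  have m0: "meet 0 (fst (concat k G l y')) = 0" unfolding fun_eq_iff meet_app by simp
  have mn: "meet (deg l + q - p) (fst (concat k G l y')) = deg l + (qq - p)"
  proof (rule ext)
    fix j
    have a: "p j \<le> q j" using P(5) by (simp add: le_fun_def)
    have b: "enat (p j) \<le> fst y j" using vp unfolding vle_def by simp
    show "meet (deg l + q - p) (fst (concat k G l y')) j = (deg l + (qq - p)) j"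
      unfolding meet_app y'_def concat_fst eadd_def esub_def shift_fst qq_def
      using pt_L1[OF a b, of "deg l j"] by (simp add: meet_app)
  qed
  have qpN: "qq - p \<in> NK k" using NK_diff meet_NK P(4) unfolding qq_def by blast
  have qpv: "vle (qq - p) (fst y')" unfolding y'_def shift_fst vle_def esub_def qq_def
    using meet_vle[of q "fst y"] unfolding vle_def by (simp add: E3)
  have c0: "snd (concat k G l y') 0 (deg l + (qq - p)) = cmp l (snd y' 0 (qq - p))"
    using CV0[OF gy' lM sl' qpN qpv] .
  have o1: "in_Omega k (esub (fst y) p) 0 (qq - p)" using qpN qpv unfolding y'_def in_Omega_def
    by (simp add: le_fun_def)
  have "snd y' 0 (qq - p) = snd y (0 + p) (qq - p + p)" unfolding y'_def using shift_val[OF o1] .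
  also have "\<dots> = snd y p qq" using vdiff_add[OF pqq] by simp
  finally have c1: "snd y' 0 (qq - p) = snd y p qq" .
  have "key (concat k G l y', (0, deg l + q - p)) = (cmp l (snd y p qq), 0, deg l + (q - p))"
  proof -
    have len: "deg l + q - p - 0 = deg l + (q - p)" "(0::vec) - 0 = 0" using P(5) by (simp_all add: le_fun_def fun_eq_iff)
    show ?thesis unfolding key_def using m0 mn c0 c1 len by simp
  qed
  then show ?thesis using inPL unfolding y'_def qq_def mp by simp
qed

lemma CompR:
  assumes e1: "(x, (m, n)) \<in> PL k G" and e2: "(y, (p, q)) \<in> PL k G" and np: "\<not> vle p (fst y)"
    and vv: "vtx G x (meet n (fst x)) = vtx G y (meet p (fst y))"
    and oo: "n - meet n (fst x) = p - meet p (fst y)"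
  shows "(concat k G (snd x 0 (meet n (fst x))) (shift k (meet p (fst y)) y), (m, n + q - p)) \<in> PL k G \<and>
    key (concat k G (snd x 0 (meet n (fst x))) (shift k (meet p (fst y)) y), (m, n + q - p)) =
      (cmp (snd x (meet m (fst x)) (meet n (fst x))) (snd y (meet p (fst y)) (meet q (fst y))),
       m - meet m (fst x), (n - m) + (q - p))"
proof -
  note P1 = PL_D[OF e1] and P2 = PL_D[OF e2]
  define mm where "mm = meet m (fst x)"
  define nn where "nn = meet n (fst x)"
  define pp where "pp = meet p (fst y)"
  define qq where "qq = meet q (fst y)"
  define lam where "lam = snd x 0 nn"
  define y' where "y' = shift k pp y"
  define z where "z = concat k G lam y'"
  have o0n: "in_Omega k (fst x) 0 nn" using P1(7) unfolding in_Omega_def nn_def by (simp add: le_fun_def)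
  have lM: "lam \<in> M" unfolding lam_def using gm_mor[OF P1(2) o0n] .
  have dl: "deg lam = nn" unfolding lam_def using gm_deg[OF P1(2) o0n] by (simp add: fun_eq_iff)
  have sl: "src lam = vtx G x nn" unfolding lam_def using gm_src[OF P1(2) o0n] .
  have ppN: "pp \<in> NK k" unfolding pp_def using meet_NK P2(3) by blast
  have ppv: "vle pp (fst y)" unfolding pp_def using meet_vle .
  have gy': "graph_morphism k G y'" unfolding y'_def using shift_gm[OF P2(2) ppN ppv] .
  have by': "y' \<in> boundary_paths k G" unfolding y'_def using shift_bp[OF P2(1) ppN ppv] .
  have o00: "in_Omega k (esub (fst y) pp) 0 0" unfolding in_Omega_def by simp
  have sl': "src lam = vtx G y' 0" unfolding y'_def using shift_vtx[OF o00] sl vv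
    unfolding nn_def pp_def by simp
  have bz: "z \<in> boundary_paths k G" unfolding z_def using concat_bp[OF by' lM sl'] .
  have gz: "graph_morphism k G z" unfolding z_def using concat_gm[OF gy' lM sl'] .
  have dz: "fst z = eadd nn (esub (fst y) pp)" unfolding z_def y'_def using dl by simp
  have ptj: "m j \<le> n j" "p j \<le> q j" "n j - mv (n j) (fst x j) = p j - mv (p j) (fst y j)" for j
    using P1(5) P2(5) fun_cong[OF oo, of j] by (simp_all add: le_fun_def meet_app)
  have mz: "meet m (fst z) = mm"
  proof (rule ext)
    fix j show "meet m (fst z) j = mm j" unfolding dz mm_def nn_def pp_def meet_app eadd_def esub_def
      using pt_R1[OF ptj] by (simp add: meet_app)
  qed
  have nz: "meet (n + q - p) (fst z) = nn + (qq - pp)"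
  proof (rule ext)
    fix j show "meet (n + q - p) (fst z) j = (nn + (qq - pp)) j"
      unfolding dz nn_def qq_def pp_def meet_app eadd_def esub_def
      using pt_R2[OF ptj] by (simp add: meet_app)
  qed
  obtain i where i: "\<not> enat (p i) \<le> fst y i" using np unfolding vle_def by blast
  have nv: "\<not> vle (n + q - p) (fst z)"
    unfolding vle_def dz eadd_def esub_def nn_def pp_def
    using pt_R3[OF ptj i] by (auto simp: meet_app)
  have NN: "n + q - p \<in> NK k" using NK_diff NK_add P1(4) P2(4) by blast
  have mle: "m \<le> n + q - p" using vle_nqp P1(5) P2(5) by blast
  have inPL: "(z, (m, n + q - p)) \<in> PL k G" unfolding PL_def using bz P1(3) NN mle nv by simp
  have oz: "in_Omega k (fst z) mm (nn + (qq - pp))" using PL_D(7)[OF inPL] mz nz by simp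
  have mmnn: "mm \<le> nn" unfolding mm_def nn_def using meet_mono[OF P1(5)] .
  have nnN: "nn \<in> NK k" unfolding nn_def using meet_NK P1(4) by blast
  have mmN: "mm \<in> NK k" unfolding mm_def using meet_NK P1(3) by blast
  have ozs: "in_Omega k (fst z) mm nn \<and> in_Omega k (fst z) nn (nn + (qq - pp))"
    using in_Omega_sub[OF oz mmnn _ nnN] by (simp add: le_fun_def)
  have c: "cmp (snd z mm nn) (snd z nn (nn + (qq - pp))) = snd z mm (nn + (qq - pp))"
    using gm_cmp[OF gz] ozs by blast
  have z1: "snd z mm nn = snd x mm nn"
  proof -
    have "snd z mm nn = mid G lam mm nn" unfolding z_def using CV3[OF gy' lM sl', of mm] dl mmnn mmN by simp
    also have "\<dots> = snd x mm nn" unfolding lam_def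
      using gm_mid[OF P1(2) o0n mmnn order_refl mmN nnN] by simp
    finally show ?thesis .
  qed
  have qpN: "qq - pp \<in> NK k" using NK_diff meet_NK P2(4) unfolding qq_def by blast
  have qpv: "vle (qq - pp) (esub (fst y) pp)" unfolding vle_def esub_def qq_def pp_def
    using meet_vle[of q "fst y"] unfolding vle_def by (simp add: E3)
  have o1: "in_Omega k (esub (fst y) pp) 0 (qq - pp)" using qpN qpv unfolding in_Omega_def
    by (simp add: le_fun_def)
  have ppqq: "pp \<le> qq" unfolding pp_def qq_def using meet_mono[OF P2(5)] .
  have z2: "snd z nn (nn + (qq - pp)) = snd y pp qq"
  proof -
    have "snd z (deg lam + 0) (deg lam + (qq - pp)) = snd y' 0 (qq - pp)" unfolding z_def
      using CV2[OF gy' lM sl', of 0 "qq - pp"] o1 unfolding y'_def by simp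
    also have "\<dots> = snd y (0 + pp) (qq - pp + pp)" unfolding y'_def using shift_val[OF o1] .
    also have "\<dots> = snd y pp qq" using vdiff_add[OF ppqq] by simp
    finally show ?thesis using dl by simp
  qed
  have len: "n + q - p - m = (n - m) + (q - p)" using vlen_nqp P1(5) P2(5) by blast
  have "key (z, (m, n + q - p)) = (cmp (snd x mm nn) (snd y pp qq), m - mm, (n - m) + (q - p))"
    unfolding key_def using mz nz c z1 z2 len by simp
  then show ?thesis using inPL unfolding z_def lam_def y'_def mm_def nn_def pp_def qq_def by simp
qed

section \<open>bar operations via keys\<close>

lemma key_simp: "key (x, (m, n)) = (snd x (meet m (fst x)) (meet n (fst x)), m - meet m (fst x), n - m)"
  unfolding key_def by simp

lemma vkey_end:
  assumes "(x, (m, n)) \<in> PL k G"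
  shows "vkey (x, n) = (src (fst (key (x, (m, n)))),
     fst (snd (key (x, (m, n)))) + snd (snd (key (x, (m, n)))) - deg (fst (key (x, (m, n)))))"
  unfolding vkey_def key_simp using seg_props[OF assms] key_I1[OF assms] by simp

lemma vkey_start:
  assumes "(x, (m, n)) \<in> PL k G"
  shows "vkey (x, m) = (rng (fst (key (x, (m, n)))), fst (snd (key (x, (m, n)))))"
  unfolding vkey_def key_simp using seg_props[OF assms] by simp

lemma VL_end: "(x, (m, n)) \<in> PL k G \<Longrightarrow> (x, n) \<in> VL k G"
  unfolding PL_def VL_def by simp
lemma VL_start: "(x, (m, n)) \<in> PL k G \<Longrightarrow> \<not> vle m (fst x) \<Longrightarrow> (x, m) \<in> VL k G"
  unfolding PL_def VL_def by simp

lemma vle_key: "vle m (fst x) \<longleftrightarrow> fst (snd (key (x, (m, n)))) = 0"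
  unfolding key_simp using vle_off by simp

lemma rep_ex:
  assumes "e \<in> PL k G"
  obtains x' m' n' where "rep (CL (key e)) = (x', (m', n'))" "(x', (m', n')) \<in> PL k G"
    "key (x', (m', n')) = key e"
  using rep_CL[OF assms] by (metis prod.collapse)

lemma L_deg: "e \<in> PL k G \<Longrightarrow> bar_deg k G (Inr (CL (key e))) = snd (snd (key e))"
proof -
  assume e: "e \<in> PL k G"
  obtain x' m' n' where r: "rep (CL (key e)) = (x', (m', n'))" "key (x', (m', n')) = key e"
    using rep_ex[OF e] by blast
  have "snd (snd (key (x', (m', n')))) = snd (snd (key e))" using r(2) by simp
  then show ?thesis unfolding bar_deg_def using r(1) by (simp add: key_simp)
qed

lemma L_src:
  assumes e: "(x, (m, n)) \<in> PL k G"
  shows "bar_src k G (Inr (CL (key (x, (m, n))))) = Inr (Vrel k G `` {(x, n)})"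
proof -
  obtain x' m' n' where r: "rep (CL (key (x, (m, n)))) = (x', (m', n'))" "(x', (m', n')) \<in> PL k G"
    "key (x', (m', n')) = key (x, (m, n))"
    using rep_ex[OF e] by blast
  have "vkey (x', n') = vkey (x, n)" using vkey_end[OF e] vkey_end[OF r(2)] r(3) by simp
  then have "Vrel k G `` {(x', n')} = Vrel k G `` {(x, n)}"
    using Vrel_img_eq2[OF VL_end[OF r(2)] VL_end[OF e]] by simp
  then show ?thesis unfolding bar_src_def using r by simp
qed

lemma L_rng:
  assumes e: "(x, (m, n)) \<in> PL k G"
  shows "bar_rng k G (Inr (CL (key (x, (m, n))))) =
    (if vle m (fst x) then Inl (rng (fst (key (x, (m, n))))) else Inr (Vrel k G `` {(x, m)}))"
proof -
  obtain x' m' n' where r: "rep (CL (key (x, (m, n)))) = (x', (m', n'))" "(x', (m', n')) \<in> PL k G"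
    "key (x', (m', n')) = key (x, (m, n))"
    using rep_ex[OF e] by blast
  have vv: "vle m' (fst x') \<longleftrightarrow> vle m (fst x)" using vle_key r(3) by metis
  show ?thesis
  proof (cases "vle m (fst x)")
    case True
    then have "vle m' (fst x')" using vv by simp
    then have "vtx G x' m' = rng (fst (key (x', (m', n'))))"
      using seg_props(3)[OF r(2)] meet_id by (simp add: key_simp)
    then show ?thesis unfolding bar_rng_def using r True vv by simp
  next
    case False
    then have F': "\<not> vle m' (fst x')" using vv by simp
    have "vkey (x', m') = vkey (x, m)" using vkey_start[OF e] vkey_start[OF r(2)] r(3) by simp
    then have "Vrel k G `` {(x', m')} = Vrel k G `` {(x, m)}"
      using Vrel_img_eq2[OF VL_start[OF r(2) F'] VL_start[OF e False]] by simp
    then show ?thesis unfolding bar_rng_def using r False F' by simp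
  qed
qed

lemma L_cmpL:
  assumes lM: "l \<in> M" and e: "(y, (p, q)) \<in> PL k G"
    and st: "bar_src k G (Inl l) = bar_rng k G (Inr (CL (key (y, (p, q)))))"
  shows "vle p (fst y) \<and> src l = rng (fst (key (y, (p, q)))) \<and>
    (\<exists>e' \<in> PL k G. key e' = (cmp l (fst (key (y, (p, q)))), 0, deg l + snd (snd (key (y, (p, q))))) \<and>
       bar_cmp k G (Inl l) (Inr (CL (key (y, (p, q))))) = Inr (CL (key e')))"
proof -
  have st': "Inl (src l) = bar_rng k G (Inr (CL (key (y, (p, q)))))" using st unfolding bar_src_def by simp
  have vp: "vle p (fst y)" and sl: "src l = rng (fst (key (y, (p, q))))"
    using st' unfolding L_rng[OF e] by (auto split: if_splits)
  obtain y' p' q' where r: "rep (CL (key (y, (p, q)))) = (y', (p', q'))" "(y', (p', q')) \<in> PL k G"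
    "key (y', (p', q')) = key (y, (p, q))"
    using rep_ex[OF e] by blast
  have vp': "vle p' (fst y')" using vle_key r(3) vp by metis
  have sl': "src l = vtx G y' p'"
    using sl r(3) seg_props(3)[OF r(2)] meet_id[OF vp'] by (simp add: key_simp)
  from CompL[OF lM r(2) vp' sl'] obtain e' where
    e': "e' = (concat k G l (shift k p' y'), (0, deg l + q' - p'))" "e' \<in> PL k G"
      "key e' = (cmp l (snd y' (meet p' (fst y')) (meet q' (fst y'))), 0, deg l + (q' - p'))" by blast
  have k': "key e' = (cmp l (fst (key (y, (p, q)))), 0, deg l + snd (snd (key (y, (p, q)))))"
    using e'(3) r(3) by (simp add: key_simp)
  have "bar_cmp k G (Inl l) (Inr (CL (key (y, (p, q))))) = Inr (Prel k G `` {e'})"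
    unfolding bar_cmp_def using r(1) e'(1) by simp
  also have "\<dots> = Inr (CL (key e'))" using Prel_img[OF e'(2)] by simp
  finally show ?thesis using vp sl k' e'(2) by blast
qed

lemma L_cmpR:
  assumes e1: "(x, (m, n)) \<in> PL k G" and e2: "(y, (p, q)) \<in> PL k G"
    and st: "bar_src k G (Inr (CL (key (x, (m, n))))) = bar_rng k G (Inr (CL (key (y, (p, q)))))"
  shows "\<not> vle p (fst y) \<and> vkey (x, n) = vkey (y, p) \<and>
    (\<exists>e' \<in> PL k G. key e' = (cmp (fst (key (x, (m, n)))) (fst (key (y, (p, q)))),
        fst (snd (key (x, (m, n)))), snd (snd (key (x, (m, n)))) + snd (snd (key (y, (p, q))))) \<and>
       bar_cmp k G (Inr (CL (key (x, (m, n))))) (Inr (CL (key (y, (p, q))))) = Inr (CL (key e')))"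
proof -
  have np: "\<not> vle p (fst y)" and VV: "Vrel k G `` {(x, n)} = Vrel k G `` {(y, p)}"
    using st unfolding L_src[OF e1] L_rng[OF e2] by (auto split: if_splits)
  have vk: "vkey (x, n) = vkey (y, p)"
    using Vrel_img_eq[OF VL_end[OF e1] VV] by simp
  obtain x' m' n' where r1: "rep (CL (key (x, (m, n)))) = (x', (m', n'))" "(x', (m', n')) \<in> PL k G"
    "key (x', (m', n')) = key (x, (m, n))"
    using rep_ex[OF e1] by blast
  obtain y' p' q' where r2: "rep (CL (key (y, (p, q)))) = (y', (p', q'))" "(y', (p', q')) \<in> PL k G"
    "key (y', (p', q')) = key (y, (p, q))"
    using rep_ex[OF e2] by blast
  have np': "\<not> vle p' (fst y')" using vle_key r2(3) np by metis
  have vk': "vkey (x', n') = vkey (y', p')"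
    using vk vkey_end[OF e1] vkey_end[OF r1(2)] r1(3) vkey_start[OF e2] vkey_start[OF r2(2)] r2(3)
      vkey_end[OF e1]
  proof -
    have "vkey (x', n') = vkey (x, n)" using vkey_end[OF e1] vkey_end[OF r1(2)] r1(3) by simp
    moreover have "vkey (y', p') = vkey (y, p)" using vkey_start[OF e2] vkey_start[OF r2(2)] r2(3) by simp
    ultimately show ?thesis using vk by simp
  qed
  have vv: "vtx G x' (meet n' (fst x')) = vtx G y' (meet p' (fst y'))"
    and oo: "n' - meet n' (fst x') = p' - meet p' (fst y')"
    using vk' unfolding vkey_def by simp_all
  from CompR[OF r1(2) r2(2) np' vv oo] obtain e' where
    e': "e' = (concat k G (snd x' 0 (meet n' (fst x'))) (shift k (meet p' (fst y')) y'), (m', n' + q' - p'))"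
      "e' \<in> PL k G"
      "key e' = (cmp (snd x' (meet m' (fst x')) (meet n' (fst x'))) (snd y' (meet p' (fst y')) (meet q' (fst y'))),
       m' - meet m' (fst x'), (n' - m') + (q' - p'))" by blast
  have k': "key e' = (cmp (fst (key (x, (m, n)))) (fst (key (y, (p, q)))),
        fst (snd (key (x, (m, n)))), snd (snd (key (x, (m, n)))) + snd (snd (key (y, (p, q)))))"
    using e'(3) r1(3) r2(3) by (simp add: key_simp)
  have "bar_cmp k G (Inr (CL (key (x, (m, n))))) (Inr (CL (key (y, (p, q))))) = Inr (Prel k G `` {e'})"
    unfolding bar_cmp_def using r1(1) r2(1) e'(1) by simp
  also have "\<dots> = Inr (CL (key e'))" using Prel_img[OF e'(2)] by simp
  finally show ?thesis using np vk k' e'(2) by blast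
qed

lemma key_I1x:
  assumes "(x, (m, n)) \<in> PL k G"
  shows "(meet n (fst x) - meet m (fst x)) + (n - meet n (fst x)) = (m - meet m (fst x)) + (n - m)"
proof (rule ext)
  fix i
  have "m \<le> n" using PL_D[OF assms] by simp
  then have "m i \<le> n i" by (simp add: le_fun_def)
  from mv_I1[OF this, of "fst x i"] show "((meet n (fst x) - meet m (fst x)) + (n - meet n (fst x))) i =
      ((m - meet m (fst x)) + (n - m)) i" by (simp add: meet_app)
qed

lemma CL_inj: "e \<in> PL k G \<Longrightarrow> CL (key e) = CL K \<Longrightarrow> key e = K"
  unfolding CL_def by blast

lemma cmpLR_Inr: "\<exists>c'. bar_cmp k G (Inl l) (Inr c) = Inr c'"
proof -
  obtain x m n where "rep c = (x, (m, n))" by (metis prod_cases3)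
  then show ?thesis unfolding bar_cmp_def by simp
qed
lemma cmpRR_Inr: "\<exists>c'. bar_cmp k G (Inr d) (Inr c) = Inr c'"
proof -
  obtain x m n where "rep c = (x, (m, n))" by (metis prod_cases3)
  moreover obtain y p q where "rep d = (y, (p, q))" by (metis prod_cases3)
  ultimately show ?thesis unfolding bar_cmp_def by simp
qed
lemma src_Inr: "\<exists>c'. bar_src k G (Inr c) = Inr c'"
proof -
  obtain x m n where "rep c = (x, (m, n))" by (metis prod_cases3)
  then show ?thesis unfolding bar_src_def by simp
qed

definition FP where
  "FP f a b gh \<longleftrightarrow> fst gh \<in> bar_mor k G \<and> snd gh \<in> bar_mor k G \<and>
     bar_src k G (fst gh) = bar_rng k G (snd gh) \<and> f = bar_cmp k G (fst gh) (snd gh) \<and>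
     bar_deg k G (fst gh) = a \<and> bar_deg k G (snd gh) = b"

lemma main_Inl:
  assumes lM: "l \<in> M" and a: "a \<in> NK k" and b: "b \<in> NK k" and d: "deg l = a + b"
  shows "\<exists>!gh. FP (Inl l) a b gh"
proof -
  from fact[OF lM a b d] obtain p where
    p: "fst p \<in> M" "snd p \<in> M" "src (fst p) = rng (snd p)" "l = cmp (fst p) (snd p)"
       "deg (fst p) = a" "deg (snd p) = b" by blast
  have ex: "FP (Inl l) a b (Inl (fst p), Inl (snd p))"
    unfolding FP_def bar_mor_def bar_src_def bar_rng_def bar_cmp_def bar_deg_def using p by simp
  have un: "gh = (Inl (fst p), Inl (snd p))" if h: "FP (Inl l) a b gh" for gh
  proof -
    have h1: "fst gh \<in> bar_mor k G" "snd gh \<in> bar_mor k G" "bar_src k G (fst gh) = bar_rng k G (snd gh)"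
      "Inl l = bar_cmp k G (fst gh) (snd gh)" "bar_deg k G (fst gh) = a" "bar_deg k G (snd gh) = b"
      using h unfolding FP_def by auto
    show ?thesis
    proof (cases "fst gh")
      case (Inl g)
      show ?thesis
      proof (cases "snd gh")
        case (Inl h')
        have gM: "g \<in> M" using h1(1) \<open>fst gh = Inl g\<close> unfolding bar_mor_def by auto
        have hM: "h' \<in> M" using h1(2) Inl unfolding bar_mor_def by auto
        have q: "src g = rng h'" "l = cmp g h'" "deg g = a" "deg h' = b"
          using h1 \<open>fst gh = Inl g\<close> Inl unfolding bar_src_def bar_rng_def bar_cmp_def bar_deg_def by auto
        have "g = fst p \<and> h' = snd p"
          using UF[OF gM hM q(1) p(1,2,3)] q p by simp
        then show ?thesis using \<open>fst gh = Inl g\<close> Inl by (simp add: prod_eq_iff)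
      next
        case (Inr c)
        obtain c' where "bar_cmp k G (Inl g) (Inr c) = Inr c'" using cmpLR_Inr by blast
        then show ?thesis using h1(4) \<open>fst gh = Inl g\<close> Inr by simp
      qed
    next
      case (Inr c1)
      show ?thesis
      proof (cases "snd gh")
        case (Inl h')
        obtain c' where "bar_src k G (Inr c1) = Inr c'" using src_Inr by blast
        then show ?thesis using h1(3) Inl \<open>fst gh = Inr c1\<close> unfolding bar_rng_def by simp
      next
        case (Inr c2)
        obtain c' where "bar_cmp k G (Inr c1) (Inr c2) = Inr c'" using cmpRR_Inr by blast
        then show ?thesis using h1(4) \<open>fst gh = Inr c1\<close> Inr by simp
      qed
    qed
  qed
  show ?thesis using ex un by blast
qed

lemma main_Inr:
  assumes e: "(x, (m, n)) \<in> PL k G" and a: "a \<in> NK k" and b: "b \<in> NK k"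
    and d: "bar_deg k G (Inr (CL (key (x, (m, n))))) = a + b"
  shows "\<exists>!gh. FP (Inr (CL (key (x, (m, n))))) a b gh"
proof -
  note P = PL_D[OF e]
  define f where "f = (Inr (CL (key (x, (m, n)))) :: ('a + ('a kpath \<times> (vec \<times> vec)) set))"
  have dmn: "n - m = a + b" using d L_deg[OF e] by (simp add: key_simp)
  have mle: "m + a \<le> n" using V1[OF dmn P(5)] .
  have lenb: "n - (m + a) = b" using V2[OF dmn P(5)] .
  have maN: "m + a \<in> NK k" using NK_add P(3) a by blast
  have e2: "(x, (m + a, n)) \<in> PL k G" unfolding PL_def using P maN mle by simp
  note P2 = PL_D[OF e2]
  define mm where "mm = meet m (fst x)"
  define nn where "nn = meet n (fst x)"
  define ma where "ma = meet (m + a) (fst x)"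
  define S where "S = snd x mm nn"
  have keye: "key (x, (m, n)) = (S, m - mm, a + b)" unfolding key_simp S_def mm_def nn_def using dmn by simp
  have SM: "S \<in> M" and dS: "deg S = nn - mm" unfolding S_def mm_def nn_def using seg_props[OF e] by auto
  have gm: "graph_morphism k G x" using P(2) .
  define g0 where "g0 = ((if vle (m + a) (fst x) then Inl (snd x m (m + a))
      else Inr (CL (key (x, (m, m + a))))) :: ('a + ('a kpath \<times> (vec \<times> vec)) set))"
  define h0 where "h0 = (Inr (CL (key (x, (m + a, n)))) :: ('a + ('a kpath \<times> (vec \<times> vec)) set))"
  have h0M: "h0 \<in> bar_mor k G" unfolding h0_def bar_mor_iff using e2 by blast
  have dh0: "bar_deg k G h0 = b" unfolding h0_def using L_deg[OF e2] lenb by (simp add: key_simp)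
  have ex: "FP f a b (g0, h0)"
  proof (cases "vle (m + a) (fst x)")
    case True
    have mma: "m \<le> m + a" by (simp add: le_fun_def)
    have vm: "vle m (fst x)" using vle_mono[OF mma True] .
    have om: "in_Omega k (fst x) m (m + a)" unfolding in_Omega_def using P(3) maN mma True by simp
    define l0 where "l0 = snd x m (m + a)"
    have l0M: "l0 \<in> M" unfolding l0_def using gm_mor[OF gm om] .
    have dl0: "deg l0 = a" unfolding l0_def using gm_deg[OF gm om] V3 by simp
    have g0e: "g0 = Inl l0" unfolding g0_def l0_def using True by simp
    have mme: "mm = m" unfolding mm_def using meet_id[OF vm] .
    have mae: "meet (m + a) (fst x) = m + a" using meet_id[OF True] .
    have rh0: "bar_rng k G h0 = Inl (vtx G x (m + a))"
      unfolding h0_def L_rng[OF e2] using True seg_props(3)[OF e2] mae by (simp add: key_simp)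
    have sg0: "bar_src k G g0 = Inl (vtx G x (m + a))"
      unfolding g0e bar_src_def l0_def using gm_src[OF gm om] by simp
    have st: "bar_src k G (Inl l0) = bar_rng k G (Inr (CL (key (x, (m + a, n)))))"
      using rh0 sg0 g0e unfolding h0_def by simp
    from L_cmpL[OF l0M e2 st] obtain e' where
      e': "e' \<in> PL k G" "key e' = (cmp l0 (fst (key (x, (m + a, n)))), 0, deg l0 + snd (snd (key (x, (m + a, n)))))"
        "bar_cmp k G (Inl l0) (Inr (CL (key (x, (m + a, n))))) = Inr (CL (key e'))" by blast
    have oan: "in_Omega k (fst x) (m + a) nn" using P2(7) mae unfolding nn_def by simp
    have cS: "cmp l0 (snd x (m + a) nn) = S"
      unfolding l0_def S_def mme using gm_cmp[OF gm om oan] by simp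
    have "key e' = key (x, (m, n))" using e'(2) cS dl0 lenb keye mme mae
      by (simp add: key_simp nn_def fun_eq_iff)
    then have "bar_cmp k G g0 h0 = f" unfolding f_def g0e h0_def using e'(3) by simp
    then show ?thesis unfolding FP_def using h0M dh0 l0M g0e rh0 sg0 dl0
      unfolding bar_mor_iff bar_deg_def by auto
  next
    case False
    have e1: "(x, (m, m + a)) \<in> PL k G" unfolding PL_def using P maN False by (simp add: le_fun_def)
    have g0e: "g0 = Inr (CL (key (x, (m, m + a))))" unfolding g0_def using False by simp
    have g0M: "g0 \<in> bar_mor k G" unfolding g0e bar_mor_iff using e1 by blast
    have dg0: "bar_deg k G g0 = a" unfolding g0e using L_deg[OF e1] V3 by (simp add: key_simp)
    have st: "bar_src k G g0 = bar_rng k G h0"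
      unfolding g0e h0_def L_src[OF e1] L_rng[OF e2] using False by simp
    from L_cmpR[OF e1 e2 st[unfolded g0e h0_def]] obtain e' where
      e': "e' \<in> PL k G" "key e' = (cmp (fst (key (x, (m, m + a)))) (fst (key (x, (m + a, n)))),
        fst (snd (key (x, (m, m + a)))), snd (snd (key (x, (m, m + a)))) + snd (snd (key (x, (m + a, n)))))"
        "bar_cmp k G (Inr (CL (key (x, (m, m + a))))) (Inr (CL (key (x, (m + a, n))))) = Inr (CL (key e'))"
      by blast
    have o1: "in_Omega k (fst x) mm ma" using PL_D(7)[OF e1] unfolding mm_def ma_def .
    have o2: "in_Omega k (fst x) ma nn" using P2(7) unfolding ma_def nn_def .
    have cS: "cmp (snd x mm ma) (snd x ma nn) = S" unfolding S_def using gm_cmp[OF gm o1 o2] by simp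
    have "key e' = key (x, (m, n))" using e'(2) cS lenb keye V3[of m a]
      by (simp add: key_simp mm_def ma_def nn_def)
    then have "bar_cmp k G g0 h0 = f" unfolding f_def g0e h0_def using e'(3) by simp
    then show ?thesis unfolding FP_def using h0M dh0 g0M dg0 st by auto
  qed
  have un: "gh = (g0, h0)" if h: "FP f a b gh" for gh
  proof -
    have h1: "fst gh \<in> bar_mor k G" "snd gh \<in> bar_mor k G" "bar_src k G (fst gh) = bar_rng k G (snd gh)"
      "f = bar_cmp k G (fst gh) (snd gh)" "bar_deg k G (fst gh) = a" "bar_deg k G (snd gh) = b"
      using h unfolding FP_def by auto
    show ?thesis
    proof (cases "fst gh")
      case (Inl g)
      have gM: "g \<in> M" using h1(1) Inl unfolding bar_mor_def by auto
      have dg: "deg g = a" using h1(5) Inl unfolding bar_deg_def by simp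
      show ?thesis
      proof (cases "snd gh")
        case Inl2: (Inl h')
        then show ?thesis using h1(4) Inl unfolding f_def bar_cmp_def by simp
      next
        case (Inr c)
        then obtain e2' where e2': "e2' \<in> PL k G" "c = CL (key e2')" using h1(2) unfolding bar_mor_iff by auto
        obtain y p q where yeq: "e2' = (y, (p, q))" by (metis prod_cases3)
        have E2: "(y, (p, q)) \<in> PL k G" using e2' yeq by simp
        have st: "bar_src k G (Inl g) = bar_rng k G (Inr (CL (key (y, (p, q)))))"
          using h1(3) Inl Inr e2' yeq by simp
        from L_cmpL[OF gM E2 st] obtain e' where
          vp: "vle p (fst y)" and sl: "src g = rng (fst (key (y, (p, q))))" and
          e': "e' \<in> PL k G" "key e' = (cmp g (fst (key (y, (p, q)))), 0, deg g + snd (snd (key (y, (p, q)))))"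
            "bar_cmp k G (Inl g) (Inr (CL (key (y, (p, q))))) = Inr (CL (key e'))" by blast
        define s2 where "s2 = fst (key (y, (p, q)))"
        have l2: "snd (snd (key (y, (p, q)))) = b" using h1(6) Inr e2' yeq L_deg[OF E2] by simp
        have o2: "fst (snd (key (y, (p, q)))) = 0" using vle_key vp by blast
        have "f = Inr (CL (key e'))" using h1(4) Inl Inr e2' yeq e'(3) by simp
        then have "key e' = key (x, (m, n))" unfolding f_def using CL_inj[OF e'(1)] by simp
        then have kk: "S = cmp g s2" "m - mm = 0" using e'(2) keye unfolding s2_def by auto
        have vm: "vle m (fst x)" using kk(2) vle_off unfolding mm_def by simp
        have mme: "mm = m" unfolding mm_def using meet_id[OF vm] .
        have s2M: "s2 \<in> M" and ds2: "deg s2 = meet q (fst y) - meet p (fst y)"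
          unfolding s2_def key_simp using seg_props[OF E2] by auto
        have "deg S = a + deg s2" using kk(1) deg_cmp[OF gM s2M] sl dg unfolding s2_def by simp
        then have "nn - m = a + deg s2" using dS mme by simp
        moreover have "m \<le> nn" using P(7) mme unfolding nn_def mm_def in_Omega_def by simp
        ultimately have manl: "m + a \<le> nn" using V1 by blast
        have nnv: "vle nn (fst x)" unfolding nn_def using meet_vle .
        have vma: "vle (m + a) (fst x)" using vle_mono[OF manl nnv] .
        have onn: "in_Omega k (fst x) m nn" using P(7) mme unfolding mm_def nn_def by simp
        have ss: "in_Omega k (fst x) m (m + a) \<and> in_Omega k (fst x) (m + a) nn"
          using in_Omega_sub[OF onn _ manl maN] by (simp add: le_fun_def)
        have dl0: "deg (snd x m (m + a)) = a" using gm_deg[OF gm] ss V3 by simp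
        have c0: "src (snd x m (m + a)) = rng (snd x (m + a) nn)" "cmp (snd x m (m + a)) (snd x (m + a) nn) = S"
          using gm_cmp[OF gm] ss unfolding S_def mme by auto
        have "g = snd x m (m + a) \<and> s2 = snd x (m + a) nn"
          apply (rule UF[OF gM s2M _ gm_mor[OF gm] gm_mor[OF gm] c0(1)])
          using sl kk(1) c0(2) dg dl0 ss unfolding s2_def by auto
        then have gg: "g = snd x m (m + a)" and ss2: "s2 = snd x (m + a) nn" by auto
        have mae: "meet (m + a) (fst x) = m + a" using meet_id[OF vma] .
        have "key (y, (p, q)) = key (x, (m + a, n))"
          using ss2 o2 l2 lenb mae unfolding s2_def nn_def
          by (simp add: key_simp prod_eq_iff)
        then have "snd gh = h0" unfolding h0_def using Inr e2' yeq by simp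
        moreover have "fst gh = g0" unfolding g0_def using Inl vma gg by simp
        ultimately show ?thesis by (simp add: prod_eq_iff)
      qed
    next
      case (Inr c1)
      show ?thesis
      proof (cases "snd gh")
        case (Inl h')
        obtain c' where "bar_src k G (Inr c1) = Inr c'" using src_Inr by blast
        then show ?thesis using h1(3) Inl \<open>fst gh = Inr c1\<close> unfolding bar_rng_def by simp
      next
        case Inr2: (Inr c2)
        obtain e1' where e1': "e1' \<in> PL k G" "c1 = CL (key e1')" using h1(1) Inr unfolding bar_mor_iff by auto
        obtain e2' where e2': "e2' \<in> PL k G" "c2 = CL (key e2')" using h1(2) Inr2 unfolding bar_mor_iff by auto
        obtain x1 m1 n1 where xeq: "e1' = (x1, (m1, n1))" by (metis prod_cases3)
        obtain y p q where yeq: "e2' = (y, (p, q))" by (metis prod_cases3)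
        have E1: "(x1, (m1, n1)) \<in> PL k G" using e1' xeq by simp
        have E2: "(y, (p, q)) \<in> PL k G" using e2' yeq by simp
        have st: "bar_src k G (Inr (CL (key (x1, (m1, n1))))) = bar_rng k G (Inr (CL (key (y, (p, q)))))"
          using h1(3) Inr Inr2 e1' e2' xeq yeq by simp
        from L_cmpR[OF E1 E2 st] obtain e' where
          np: "\<not> vle p (fst y)" and vk: "vkey (x1, n1) = vkey (y, p)" and
          e': "e' \<in> PL k G" "key e' = (cmp (fst (key (x1, (m1, n1)))) (fst (key (y, (p, q)))),
             fst (snd (key (x1, (m1, n1)))), snd (snd (key (x1, (m1, n1)))) + snd (snd (key (y, (p, q)))))"
            "bar_cmp k G (Inr (CL (key (x1, (m1, n1))))) (Inr (CL (key (y, (p, q))))) = Inr (CL (key e'))"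
          by blast
        define s1 where "s1 = fst (key (x1, (m1, n1)))"
        define s2 where "s2 = fst (key (y, (p, q)))"
        define o1 where "o1 = fst (snd (key (x1, (m1, n1))))"
        define o2 where "o2 = fst (snd (key (y, (p, q))))"
        have l1: "snd (snd (key (x1, (m1, n1)))) = a" using h1(5) Inr e1' xeq L_deg[OF E1] by simp
        have l2: "snd (snd (key (y, (p, q)))) = b" using h1(6) Inr2 e2' yeq L_deg[OF E2] by simp
        have "f = Inr (CL (key e'))" using h1(4) Inr Inr2 e1' e2' xeq yeq e'(3) by simp
        then have "key e' = key (x, (m, n))" unfolding f_def using CL_inj[OF e'(1)] by simp
        then have kk: "S = cmp s1 s2" "o1 = m - mm"
          using e'(2) keye unfolding s1_def s2_def o1_def by auto
        have s1M: "s1 \<in> M" and ds1: "deg s1 = meet n1 (fst x1) - meet m1 (fst x1)"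
          unfolding s1_def key_simp using seg_props[OF E1] by auto
        have s2M: "s2 \<in> M" and ds2: "deg s2 = meet q (fst y) - meet p (fst y)"
          unfolding s2_def key_simp using seg_props[OF E2] by auto
        have sr: "src s1 = rng s2" using vk vkey_end[OF E1] vkey_start[OF E2] unfolding s1_def s2_def by simp
        have oe: "n1 - meet n1 (fst x1) = o2" using vk unfolding vkey_def o2_def key_simp by simp
        have I1: "deg s1 + o2 = o1 + a" using key_I1x[OF E1] ds1 oe l1 unfolding o1_def by (simp add: key_simp)
        have I2: "deg s2 j = 0" if "0 < o2 j" for j
          using key_I2[OF E2, of j] that ds2 unfolding o2_def key_simp by simp
        have o2nz: "o2 \<noteq> 0" using np vle_off unfolding o2_def key_simp by simp
        have dS2: "deg S = deg s1 + deg s2" using kk(1) deg_cmp[OF s1M s2M sr] by simp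
        have ptj: "mv (m j + a j) (fst x j) = mv (m j) (fst x j) + deg s1 j \<and>
            (m j + a j) - mv (m j + a j) (fst x j) = o2 j" for j
        proof (rule pt_U)
          show "deg s1 j + o2 j = o1 j + a j" using fun_cong[OF I1, of j] by simp
          show "o1 j = m j - mv (m j) (fst x j)" using fun_cong[OF kk(2), of j] unfolding mm_def by (simp add: meet_app)
          show "mv (n j) (fst x j) - mv (m j) (fst x j) = deg s1 j + deg s2 j"
            using fun_cong[OF dS, of j] fun_cong[OF dS2, of j] unfolding mm_def nn_def by (simp add: meet_app)
          show "n j - m j = a j + b j" using fun_cong[OF dmn, of j] by simp
          show "0 < o2 j \<Longrightarrow> deg s2 j = 0" using I2 by blast
          show "mv (m j) (fst x j) \<le> mv (n j) (fst x j)" using P(5) mv_mono by (simp add: le_fun_def)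
        qed
        have mae: "ma = mm + deg s1"
        proof (rule ext)
          fix j show "ma j = (mm + deg s1) j" unfolding ma_def mm_def using ptj[of j] by (simp add: meet_app)
        qed
        have oae: "(m + a) - ma = o2"
        proof (rule ext)
          fix j have h: "mv (m j + a j) (fst x j) = mv (m j) (fst x j) + deg s1 j"
            "(m j + a j) - mv (m j + a j) (fst x j) = o2 j" using ptj[of j] by auto
          show "((m + a) - ma) j = o2 j" unfolding ma_def meet_app using h(2) by simp
        qed
        have nva: "\<not> vle (m + a) (fst x)" using vle_off oae o2nz unfolding ma_def by simp
        have E1x: "(x, (m, m + a)) \<in> PL k G" unfolding PL_def using P maN nva by (simp add: le_fun_def)
        have oa1: "in_Omega k (fst x) mm ma" using PL_D(7)[OF E1x] unfolding mm_def ma_def .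
        have oa2: "in_Omega k (fst x) ma nn" using P2(7) unfolding ma_def nn_def .
        have c0: "src (snd x mm ma) = rng (snd x ma nn)" "cmp (snd x mm ma) (snd x ma nn) = S"
          using gm_cmp[OF gm oa1 oa2] unfolding S_def by auto
        have "ma - mm = deg s1" using mae V3 by simp
        then have dd: "deg (snd x mm ma) = deg s1" using gm_deg[OF gm oa1] by simp
        have "s1 = snd x mm ma \<and> s2 = snd x ma nn"
          using UF[OF s1M s2M sr gm_mor[OF gm oa1] gm_mor[OF gm oa2] c0(1)] kk(1) c0(2) dd by simp
        then have ss1: "s1 = snd x mm ma" and ss2: "s2 = snd x ma nn" by auto
        have "key (x1, (m1, n1)) = key (x, (m, m + a))"
          using ss1 kk(2) l1 V3[of m a] unfolding s1_def o1_def mm_def ma_def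
          by (simp add: key_simp prod_eq_iff)
        then have "fst gh = g0" unfolding g0_def using nva Inr e1' xeq by simp
        moreover have "key (y, (p, q)) = key (x, (m + a, n))"
          using ss2 oae l2 lenb unfolding s2_def o2_def ma_def nn_def
          by (simp add: key_simp prod_eq_iff)
        then have "snd gh = h0" unfolding h0_def using Inr2 e2' yeq by simp
        ultimately show ?thesis by (simp add: prod_eq_iff)
      qed
    qed
  qed
  show ?thesis using ex un unfolding f_def by blast
qed

end

theorem lemma3p23:
  fixes k :: nat and G :: "('v, 'a) kgraph"
  assumes "is_kgraph k G"
  shows "\<forall>f \<in> bar_mor k G. \<forall>a \<in> NK k. \<forall>b \<in> NK k. bar_deg k G f = a + b \<longrightarrow>
           (\<exists>!gh. fst gh \<in> bar_mor k G \<and> snd gh \<in> bar_mor k G \<and>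
                  bar_src k G (fst gh) = bar_rng k G (snd gh) \<and>
                  f = bar_cmp k G (fst gh) (snd gh) \<and>
                  bar_deg k G (fst gh) = a \<and> bar_deg k G (snd gh) = b)"
proof -
  interpret kgl k G using assms by (simp add: kgl_def)
  show ?thesis
  proof (intro ballI impI)
    fix f a b
    assume f: "f \<in> bar_mor k G" and a: "a \<in> NK k" and b: "b \<in> NK k" and d: "bar_deg k G f = a + b"
    have "\<exists>!gh. FP f a b gh"
    proof (cases "\<exists>l \<in> kg_mor G. f = Inl l")
      case True
      then obtain l where l: "l \<in> kg_mor G" "f = Inl l" by blast
      have "kg_deg G l = a + b" using d l unfolding bar_deg_def by simp
      then show ?thesis using main_Inl[OF l(1) a b] l(2) by simp
    next
      case False
      then obtain e where e: "e \<in> PL k G" "f = Inr (CL (key e))" using f unfolding bar_mor_iff by blast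
      obtain x m n where xe: "e = (x, (m, n))" by (metis prod_cases3)
      show ?thesis using main_Inr[of x m n a b] e xe a b d by simp
    qed
    then show "\<exists>!gh. fst gh \<in> bar_mor k G \<and> snd gh \<in> bar_mor k G \<and>
                  bar_src k G (fst gh) = bar_rng k G (snd gh) \<and>
                  f = bar_cmp k G (fst gh) (snd gh) \<and>
                  bar_deg k G (fst gh) = a \<and> bar_deg k G (snd gh) = b"
      unfolding FP_def .
  qed
qed

end
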